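(* Let $X$ be a Wixárika poset obtained from the one-element poset $\langle1\rangle$ by an expression (word) $w$ in which the binary operation $\mu$ occurs $m$ times and the unary operation $D$ occurs $d$ times. Then: (1) $Z_X$ has a unique expression $Z_X=\sum_{j=i}^{k}a_j\zeta_j$ with non-negative integers $a_j$ and $a_i,a_k\neq0$; (2) $i$ is the maximal number of elements of a chain in $X$; (3) $k=|X|$; (4) $k-i=d$, and $d$ equals the first Betti number of the Hasse diagram of $X$ (viewed as an undirected graph); (5) $m=i-2d-1$, and the tree of $w$ has $m+1$ leaves; (6) $\sum_{u=i}^{k}(-1)^{k-u}a_u=1$.
   Context: For $n\ge1$, $\langle n\rangle$ is the chain $1<\dots<n$; $\Omega(X,n)$ is the number of maps $f:X\to\langle n\rangle$ with $u<v\Rightarrow f(u)<f(v)$, and $Z_X(x)=\sum_{n\ge1}\Omega(X,n)x^n$. For $j\ge1$, $\zeta_j(x)=\frac{x^j}{(1-x)^{j+1}}$ (the strict order series of $\langle j\rangle$). The concatenation $\mu(Y,W)$ is the disjoint union of $Y$ and $W$ with their orders and every element of $Y$ below every element of $W$; $Y\sqcup W$ is the disjoint union with no relations. The handle operation is $D(X)=\mu(\langle1\rangle,\mu(\langle1\rangle\sqcup X,\langle1\rangle))$: $X$ together with a new minimum, a new maximum, and a new element strictly between them incomparable to all of $X$. Wixárika posets are the posets obtained from $\langle1\rangle$ by finitely many applications of $\mu$ and $D$. *)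

theory Defs
  imports Main "HOL-Library.FuncSet" "HOL-Computational_Algebra.Formal_Power_Series"
begin

datatype wword = One | Mu wword wword | Dh wword

fun count_mu :: "wword \<Rightarrow> nat" where
  "count_mu One = 0"
| "count_mu (Mu a b) = Suc (count_mu a + count_mu b)"
| "count_mu (Dh a) = count_mu a"

fun count_D :: "wword \<Rightarrow> nat" where
  "count_D One = 0"
| "count_D (Mu a b) = count_D a + count_D b"
| "count_D (Dh a) = Suc (count_D a)"

fun leaves :: "wword \<Rightarrow> nat" where
  "leaves One = 1"
| "leaves (Mu a b) = leaves a + leaves b"
| "leaves (Dh a) = leaves a"

text \<open>In Mu a b the elements of a are tagged 0, those of b tagged 1; in Dh a the
  elements of a are tagged 0, the new minimum is [2], the new maximum [3]
  and the new middle element [4].\<close>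
fun wcar :: "wword \<Rightarrow> nat list set" where
  "wcar One = {[]}"
| "wcar (Mu a b) = (Cons 0) ` wcar a \<union> (Cons 1) ` wcar b"
| "wcar (Dh a) = {[2], [3], [4]} \<union> (Cons 0) ` wcar a"

fun wless :: "wword \<Rightarrow> nat list \<Rightarrow> nat list \<Rightarrow> bool" where
  "wless One x y = False"
| "wless (Mu a b) x y =
     (x \<noteq> [] \<and> y \<noteq> [] \<and>
       ((hd x = 0 \<and> hd y = 0 \<and> wless a (tl x) (tl y)) \<or>
        (hd x = 1 \<and> hd y = 1 \<and> wless b (tl x) (tl y)) \<or>
        (hd x = 0 \<and> hd y = 1 \<and> tl x \<in> wcar a \<and> tl y \<in> wcar b)))"
| "wless (Dh a) x y =
     ((x = [2] \<and> y \<in> wcar (Dh a) - {[2]}) \<or>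
      (y = [3] \<and> x \<in> wcar (Dh a) - {[3]}) \<or>
      (x \<noteq> [] \<and> y \<noteq> [] \<and> hd x = 0 \<and> hd y = 0 \<and> wless a (tl x) (tl y)))"

definition Omega :: "'a set \<Rightarrow> ('a \<Rightarrow> 'a \<Rightarrow> bool) \<Rightarrow> nat \<Rightarrow> nat" where
  "Omega V lt n = card {f \<in> V \<rightarrow>\<^sub>E {1..n}. \<forall>u\<in>V. \<forall>v\<in>V. lt u v \<longrightarrow> f u < f v}"

definition Zser :: "'a set \<Rightarrow> ('a \<Rightarrow> 'a \<Rightarrow> bool) \<Rightarrow> real fps" where
  "Zser V lt = Abs_fps (\<lambda>n. if n = 0 then 0 else real (Omega V lt n))"

definition zeta :: "nat \<Rightarrow> real fps" where
  "zeta j = fps_X ^ j / (1 - fps_X) ^ (j + 1)"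

definition is_chain_in :: "'a set \<Rightarrow> ('a \<Rightarrow> 'a \<Rightarrow> bool) \<Rightarrow> 'a set \<Rightarrow> bool" where
  "is_chain_in V lt C \<longleftrightarrow> C \<subseteq> V \<and> (\<forall>x\<in>C. \<forall>y\<in>C. x \<noteq> y \<longrightarrow> lt x y \<or> lt y x)"

definition max_chain :: "'a set \<Rightarrow> ('a \<Rightarrow> 'a \<Rightarrow> bool) \<Rightarrow> nat" where
  "max_chain V lt = Max {card C | C. is_chain_in V lt C}"

definition hasse_edges :: "'a set \<Rightarrow> ('a \<Rightarrow> 'a \<Rightarrow> bool) \<Rightarrow> ('a \<times> 'a) set" where
  "hasse_edges V lt = {(u, v). u \<in> V \<and> v \<in> V \<and> lt u v \<and> \<not> (\<exists>z\<in>V. lt u z \<and> lt z v)}"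

definition components :: "'a set \<Rightarrow> ('a \<times> 'a) set \<Rightarrow> 'a set set" where
  "components V E = V // {(x, y). x \<in> V \<and> y \<in> V \<and> (x, y) \<in> (E \<union> E\<inverse>)\<^sup>*}"

definition betti1_hasse :: "'a set \<Rightarrow> ('a \<Rightarrow> 'a \<Rightarrow> bool) \<Rightarrow> int" where
  "betti1_hasse V lt = int (card (hasse_edges V lt)) - int (card V)
      + int (card (components V (hasse_edges V lt)))"

end

theory Submission
  imports Defs
begin


definition Bf :: "nat \<Rightarrow> real fps" where
  "Bf j = Abs_fps (\<lambda>n. of_nat (n choose j))"

lemma one_minus_X_nth: "fps_nth (f * (1 - fps_X)) n = fps_nth f n - (if n = 0 then 0 else fps_nth f (n - 1))"
  for f :: "real fps"
  by (simp add: algebra_simps fps_X_mult_nth mult.commute[of f])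

lemma Bf_step: "Bf (Suc j) * (1 - fps_X) = fps_X * Bf j"
proof (rule fps_ext)
  fix n
  show "fps_nth (Bf (Suc j) * (1 - fps_X)) n = fps_nth (fps_X * Bf j) n"
    by (cases n) (simp_all add: one_minus_X_nth fps_X_mult_nth Bf_def)
qed

lemma Bf_0: "Bf 0 * (1 - fps_X) = 1"
proof (rule fps_ext)
  fix n
  show "fps_nth (Bf 0 * (1 - fps_X)) n = fps_nth 1 n"
    by (cases n) (simp_all add: one_minus_X_nth Bf_def)
qed

lemma Bf_pow: "Bf j * (1 - fps_X) ^ Suc j = fps_X ^ j"
proof (induction j)
  case 0 then show ?case using Bf_0 by simp
next
  case (Suc j)
  have "Bf (Suc j) * (1 - fps_X) ^ Suc (Suc j) = (Bf (Suc j) * (1 - fps_X)) * (1 - fps_X) ^ Suc j"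
    by (simp only: power_Suc[of _ "Suc j"] mult.assoc)
  also have "\<dots> = fps_X * (Bf j * (1 - fps_X) ^ Suc j)" by (simp only: Bf_step mult.assoc)
  finally show ?case using Suc by (simp only: power_Suc)
qed

lemma omX_pow_nz: "((1::real fps) - fps_X) ^ k \<noteq> 0"
proof -
  have "fps_nth ((1::real fps) - fps_X) 0 \<noteq> 0" by simp
  then have "(1::real fps) - fps_X \<noteq> 0" by auto
  then show ?thesis by simp
qed

lemma zeta_Bf: "zeta j = Bf j"
  unfolding zeta_def using Bf_pow[of j, symmetric] fps_divide_times_eq[OF omX_pow_nz[of "Suc j"]]
  by simp

lemma zeta_nth: "fps_nth (zeta j) n = of_nat (n choose j)"
  by (simp add: zeta_Bf Bf_def)

lemma zeta_pow: "zeta j * (1 - fps_X) ^ Suc j = fps_X ^ j"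
  using Bf_pow[of j] by (simp only: zeta_Bf)

lemma zeta_mult: "(1 - fps_X) * zeta p * zeta q = zeta (p + q)"
proof -
  let ?U = "(1::real fps) - fps_X"
  have "((1 - fps_X) * zeta p * zeta q) * ?U ^ Suc (p + q) =
        (zeta p * ?U ^ Suc p) * (zeta q * ?U ^ Suc q)"
    by (simp add: algebra_simps power_add)
  also have "\<dots> = fps_X ^ (p + q)" by (simp only: zeta_pow power_add)
  also have "\<dots> = zeta (p + q) * ?U ^ Suc (p + q)" by (simp only: zeta_pow)
  finally show ?thesis using omX_pow_nz[of "Suc (p+q)"] by simp
qed




definition Fs :: "'a set \<Rightarrow> ('a \<Rightarrow> 'a \<Rightarrow> bool) \<Rightarrow> nat set \<Rightarrow> ('a \<Rightarrow> nat) set" where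
  "Fs V lt S = {f \<in> V \<rightarrow>\<^sub>E S. \<forall>u\<in>V. \<forall>v\<in>V. lt u v \<longrightarrow> f u < f v}"

lemma Omega_Fs: "Omega V lt n = card (Fs V lt {1..n})"
  by (simp add: Omega_def Fs_def)

lemma finite_Fs: "finite V \<Longrightarrow> finite S \<Longrightarrow> finite (Fs V lt S)"
  unfolding Fs_def by (rule finite_subset[of _ "V \<rightarrow>\<^sub>E S"]) (auto intro: finite_PiE)

lemma Omega_cong:
  assumes "\<And>u v. u \<in> V \<Longrightarrow> v \<in> V \<Longrightarrow> lt u v = lt' u v"
  shows "Omega V lt n = Omega V lt' n"
  unfolding Omega_def using assms by (metis (no_types, lifting) PiE_mem)

lemma Omega_relabel:
  assumes inj: "inj_on e V"
  shows "Omega (e ` V) lt n = Omega V (\<lambda>u v. lt (e u) (e v)) n"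
proof -
  let ?e' = "the_inv_into V e"
  have ee: "\<And>x. x \<in> V \<Longrightarrow> ?e' (e x) = x" using inj by (simp add: the_inv_into_f_f)
  have ee2: "\<And>y. y \<in> e ` V \<Longrightarrow> e (?e' y) = y" using inj by (auto simp: the_inv_into_f_f)
  have ee3: "\<And>y. y \<in> e ` V \<Longrightarrow> ?e' y \<in> V" using inj by (auto simp: the_inv_into_f_f)
  let ?A = "Fs (e ` V) lt {1..n}" and ?B = "Fs V (\<lambda>u v. lt (e u) (e v)) {1..n}"
  have "bij_betw (\<lambda>f. restrict (f \<circ> e) V) ?A ?B"
  proof (rule bij_betw_byWitness[where f'="\<lambda>g. restrict (g \<circ> ?e') (e ` V)"])
    show "\<forall>a\<in>?A. restrict (restrict (a \<circ> e) V \<circ> ?e') (e ` V) = a"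
    proof
      fix a assume a: "a \<in> ?A"
      show "restrict (restrict (a \<circ> e) V \<circ> ?e') (e ` V) = a"
      proof
        fix x show "restrict (restrict (a \<circ> e) V \<circ> ?e') (e ` V) x = a x"
          using a ee2 ee3 by (cases "x \<in> e ` V") (auto simp: Fs_def PiE_def extensional_def)
      qed
    qed
    show "\<forall>a\<in>?B. restrict (restrict (a \<circ> ?e') (e ` V) \<circ> e) V = a"
    proof
      fix a assume a: "a \<in> ?B"
      show "restrict (restrict (a \<circ> ?e') (e ` V) \<circ> e) V = a"
      proof
        fix x show "restrict (restrict (a \<circ> ?e') (e ` V) \<circ> e) V x = a x"
          using a ee by (cases "x \<in> V") (auto simp: Fs_def PiE_def extensional_def)
      qed
    qed
    show "(\<lambda>f. restrict (f \<circ> e) V) ` ?A \<subseteq> ?B"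
      by (auto simp: Fs_def)
    show "(\<lambda>g. restrict (g \<circ> ?e') (e ` V)) ` ?B \<subseteq> ?A"
    proof
      fix h assume "h \<in> (\<lambda>g. restrict (g \<circ> ?e') (e ` V)) ` ?B"
      then obtain g where g: "g \<in> ?B" and h: "h = restrict (g \<circ> ?e') (e ` V)" by auto
      show "h \<in> ?A" using g ee unfolding h Fs_def by auto
    qed
  qed
  then show ?thesis by (simp add: Omega_Fs bij_betw_same_card)
qed

lemma Fs_shift:
  assumes "finite V"
  shows "card (Fs V lt {t+1..t+m}) = Omega V lt m"
proof -
  let ?A = "Fs V lt {t+1..t+m}" and ?B = "Fs V lt {1..m}"
  have "bij_betw (\<lambda>f. restrict (\<lambda>x. f x - t) V) ?A ?B"
  proof (rule bij_betw_byWitness[where f'="\<lambda>g. restrict (\<lambda>x. g x + t) V"])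
    show "\<forall>a\<in>?A. restrict (\<lambda>x. restrict (\<lambda>x. a x - t) V x + t) V = a"
    proof
      fix a assume a: "a \<in> ?A"
      show "restrict (\<lambda>x. restrict (\<lambda>x. a x - t) V x + t) V = a"
      proof
        fix x show "restrict (\<lambda>x. restrict (\<lambda>x. a x - t) V x + t) V x = a x"
          using a by (cases "x \<in> V") (auto simp: Fs_def PiE_def extensional_def Pi_def)
      qed
    qed
    show "\<forall>a\<in>?B. restrict (\<lambda>x. restrict (\<lambda>x. a x + t) V x - t) V = a"
    proof
      fix a assume a: "a \<in> ?B"
      show "restrict (\<lambda>x. restrict (\<lambda>x. a x + t) V x - t) V = a"
      proof
        fix x show "restrict (\<lambda>x. restrict (\<lambda>x. a x + t) V x - t) V x = a x"
          using a by (cases "x \<in> V") (auto simp: Fs_def PiE_def extensional_def)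
      qed
    qed
    show "(\<lambda>f. restrict (\<lambda>x. f x - t) V) ` ?A \<subseteq> ?B"
    proof
      fix h assume "h \<in> (\<lambda>f. restrict (\<lambda>x. f x - t) V) ` ?A"
      then obtain f where f: "f \<in> ?A" and h: "h = restrict (\<lambda>x. f x - t) V" by auto
      have r: "\<And>x. x \<in> V \<Longrightarrow> t + 1 \<le> f x \<and> f x \<le> t + m" using f by (auto simp: Fs_def PiE_def Pi_def)
      have r1: "\<forall>x\<in>V. f x - t \<in> {1..m}" using r by force
      have r2: "\<forall>u\<in>V. \<forall>v\<in>V. lt u v \<longrightarrow> f u - t < f v - t"
      proof (intro ballI impI)
        fix u v assume uv: "u \<in> V" "v \<in> V" "lt u v"
        then have "f u < f v" using f by (auto simp: Fs_def)
        then show "f u - t < f v - t" using r uv by force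
      qed
      show "h \<in> ?B" unfolding h Fs_def using r1 r2 by auto
    qed
    show "(\<lambda>g. restrict (\<lambda>x. g x + t) V) ` ?B \<subseteq> ?A"
      by (auto simp: Fs_def)
  qed
  then show ?thesis by (simp add: Omega_Fs bij_betw_same_card)
qed

lemma Omega_zero: "V \<noteq> {} \<Longrightarrow> Omega V lt 0 = 0"
  by (auto simp: Omega_def PiE_eq_empty_iff)

lemma Fs_mono: "m \<le> n \<Longrightarrow> Fs V lt {1..m} \<subseteq> Fs V lt {1..n}"
  by (auto simp: Fs_def PiE_def Pi_def)

lemma Omega_singleton: "\<not> lt p p \<Longrightarrow> Omega {p} lt n = n"
proof -
  assume "\<not> lt p p"
  then have "Fs {p} lt {1..n} = {p} \<rightarrow>\<^sub>E {1..n}" by (auto simp: Fs_def)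
  then show ?thesis by (simp add: Omega_Fs card_PiE)
qed




lemma concat_count:
  assumes fin1: "finite V1" and fin2: "finite V2" and ne1: "V1 \<noteq> {}" and ne2: "V2 \<noteq> {}"
    and disj: "V1 \<inter> V2 = {}"
    and up: "\<And>u v. u \<in> V1 \<Longrightarrow> v \<in> V2 \<Longrightarrow> lt u v"
    and down: "\<And>u v. u \<in> V2 \<Longrightarrow> v \<in> V1 \<Longrightarrow> \<not> lt u v"
  shows "Omega (V1 \<union> V2) lt n =
     (\<Sum>t\<le>n. (Omega V1 lt t - Omega V1 lt (t - 1)) * Omega V2 lt (n - t))"
proof -
  define F where "F = (\<lambda>V k. Fs V lt {1..k})"
  define Mx where "Mx = (\<lambda>g. Max (g ` V1) :: nat)"
  define P where "P = Sigma (F V1 n) (\<lambda>g. {h \<in> F V2 n. \<forall>y\<in>V2. Mx g < h y})"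
  have Mx_le: "\<And>g t. (Mx g \<le> t) = (\<forall>x\<in>V1. g x \<le> t)"
    unfolding Mx_def using fin1 ne1 by (simp add: Max_le_iff)
  have Mx_less: "\<And>g t. (Mx g < t) = (\<forall>x\<in>V1. g x < t)"
    unfolding Mx_def using fin1 ne1 by (simp add: Max_less_iff)
  have Mx_mem: "\<And>g. \<exists>x\<in>V1. Mx g = g x"
    unfolding Mx_def using fin1 ne1 by (meson Max_in finite_imageI image_iff image_is_empty)
  have step1: "card (F (V1 \<union> V2) n) = card P"
  proof (rule bij_betw_same_card[where f="\<lambda>f. (restrict f V1, restrict f V2)"])
    show "bij_betw (\<lambda>f. (restrict f V1, restrict f V2)) (F (V1 \<union> V2) n) P"
    proof (rule bij_betw_byWitness[where f'="\<lambda>(g,h). (\<lambda>x. if x \<in> V1 then g x else h x)"])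
      show "\<forall>a\<in>F (V1 \<union> V2) n. (\<lambda>(g,h). (\<lambda>x. if x \<in> V1 then g x else h x)) (restrict a V1, restrict a V2) = a"
      proof
        fix a assume a: "a \<in> F (V1 \<union> V2) n"
        show "(\<lambda>(g,h). (\<lambda>x. if x \<in> V1 then g x else h x)) (restrict a V1, restrict a V2) = a"
        proof
          fix x show "(\<lambda>(g,h). (\<lambda>x. if x \<in> V1 then g x else h x)) (restrict a V1, restrict a V2) x = a x"
            using a by (auto simp: F_def Fs_def PiE_def extensional_def)
        qed
      qed
      show "\<forall>b\<in>P. (\<lambda>f. (restrict f V1, restrict f V2)) ((\<lambda>(g,h). (\<lambda>x. if x \<in> V1 then g x else h x)) b) = b"
      proof
        fix b assume b: "b \<in> P"
        obtain g h where gh: "b = (g, h)" by (cases b)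
        have g: "g \<in> F V1 n" and h: "h \<in> F V2 n" using b gh by (auto simp: P_def)
        have "restrict (\<lambda>x. if x \<in> V1 then g x else h x) V1 = g"
        proof
          fix x show "restrict (\<lambda>x. if x \<in> V1 then g x else h x) V1 x = g x"
            using g by (auto simp: F_def Fs_def PiE_def extensional_def)
        qed
        moreover have "restrict (\<lambda>x. if x \<in> V1 then g x else h x) V2 = h"
        proof
          fix x show "restrict (\<lambda>x. if x \<in> V1 then g x else h x) V2 x = h x"
            using h disj by (auto simp: F_def Fs_def PiE_def extensional_def)
        qed
        ultimately show "(\<lambda>f. (restrict f V1, restrict f V2)) ((\<lambda>(g,h). (\<lambda>x. if x \<in> V1 then g x else h x)) b) = b"
          using gh by simp
      qed
      show "(\<lambda>f. (restrict f V1, restrict f V2)) ` F (V1 \<union> V2) n \<subseteq> P"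
      proof
        fix p assume "p \<in> (\<lambda>f. (restrict f V1, restrict f V2)) ` F (V1 \<union> V2) n"
        then obtain f where f: "f \<in> F (V1 \<union> V2) n" and p: "p = (restrict f V1, restrict f V2)" by auto
        have a: "restrict f V1 \<in> F V1 n" using f by (auto simp: F_def Fs_def)
        have b: "restrict f V2 \<in> F V2 n" using f by (auto simp: F_def Fs_def)
        have c: "\<forall>y\<in>V2. Mx (restrict f V1) < restrict f V2 y"
        proof
          fix y assume y: "y \<in> V2"
          have "\<forall>x\<in>V1. restrict f V1 x < restrict f V2 y"
            using f y up by (auto simp: F_def Fs_def)
          then show "Mx (restrict f V1) < restrict f V2 y" using Mx_less by blast
        qed
        show "p \<in> P" using a b c p by (simp add: P_def)
      qed
      show "(\<lambda>(g,h). (\<lambda>x. if x \<in> V1 then g x else h x)) ` P \<subseteq> F (V1 \<union> V2) n"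
      proof
        fix q assume "q \<in> (\<lambda>(g,h). (\<lambda>x. if x \<in> V1 then g x else h x)) ` P"
        then obtain g h where gh: "(g, h) \<in> P" and q: "q = (\<lambda>x. if x \<in> V1 then g x else h x)"
          by auto
        have g: "g \<in> F V1 n" and h: "h \<in> F V2 n" and gh2: "\<forall>y\<in>V2. Mx g < h y"
          using gh by (auto simp: P_def)
        have gh3: "\<And>x y. x \<in> V1 \<Longrightarrow> y \<in> V2 \<Longrightarrow> g x < h y"
          using gh2 Mx_le by (meson le_less_trans order_refl)
        have pi: "q \<in> (V1 \<union> V2) \<rightarrow>\<^sub>E {1..n}"
          using g h unfolding q by (auto simp: F_def Fs_def PiE_def extensional_def Pi_def)
        have st: "\<forall>u\<in>V1 \<union> V2. \<forall>v\<in>V1 \<union> V2. lt u v \<longrightarrow> q u < q v"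
        proof (intro ballI impI)
          fix u v assume u: "u \<in> V1 \<union> V2" and v: "v \<in> V1 \<union> V2" and l: "lt u v"
          show "q u < q v"
          proof (cases "u \<in> V1")
            case True
            then show ?thesis
            proof (cases "v \<in> V1")
              case True
              with \<open>u \<in> V1\<close> l g show ?thesis unfolding q by (auto simp: F_def Fs_def)
            next
              case False
              with v \<open>u \<in> V1\<close> gh3 show ?thesis unfolding q by auto
            qed
          next
            case False
            then have u2: "u \<in> V2" using u by auto
            show ?thesis
            proof (cases "v \<in> V1")
              case True
              with u2 l down show ?thesis by blast
            next
              case False
              with v u2 \<open>u \<notin> V1\<close> l h show ?thesis unfolding q by (auto simp: F_def Fs_def)
            qed
          qed
        qed
        show "q \<in> F (V1 \<union> V2) n" using pi st by (simp add: F_def Fs_def)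
      qed
    qed
  qed
  have finF: "\<And>V k. finite V \<Longrightarrow> finite (F V k)" by (simp add: F_def finite_Fs)
  have step2: "card P = (\<Sum>g\<in>F V1 n. card {h \<in> F V2 n. \<forall>y\<in>V2. Mx g < h y})"
    unfolding P_def by (rule card_SigmaI) (use finF[OF fin1] finF[OF fin2] in auto)
  have rangeMx: "\<And>g. g \<in> F V1 n \<Longrightarrow> Mx g \<in> {..n} \<and> 1 \<le> Mx g"
  proof -
    fix g assume g: "g \<in> F V1 n"
    obtain x where x: "x \<in> V1" "Mx g = g x" using Mx_mem by blast
    then show "Mx g \<in> {..n} \<and> 1 \<le> Mx g" using g by (auto simp: F_def Fs_def PiE_def Pi_def)
  qed
  have step3: "\<And>t. t \<le> n \<Longrightarrow> card {h \<in> F V2 n. \<forall>y\<in>V2. t < h y} = Omega V2 lt (n - t)"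
  proof -
    fix t assume t: "t \<le> n"
    have "{h \<in> F V2 n. \<forall>y\<in>V2. t < h y} = Fs V2 lt {t+1..t+(n-t)}"
      using t by (auto simp: F_def Fs_def PiE_def Pi_def)
    then show "card {h \<in> F V2 n. \<forall>y\<in>V2. t < h y} = Omega V2 lt (n - t)"
      using Fs_shift[OF fin2] by simp
  qed
  have step4: "(\<Sum>g\<in>F V1 n. card {h \<in> F V2 n. \<forall>y\<in>V2. Mx g < h y})
      = (\<Sum>g\<in>F V1 n. Omega V2 lt (n - Mx g))"
    using step3 rangeMx by (intro sum.cong) auto
  have step5: "(\<Sum>g\<in>F V1 n. Omega V2 lt (n - Mx g)) =
      (\<Sum>t\<le>n. (\<Sum>g\<in>{g \<in> F V1 n. Mx g = t}. Omega V2 lt (n - Mx g)))"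
  proof -
    have sub: "Mx ` F V1 n \<subseteq> {..n}" using rangeMx by auto
    show ?thesis by (rule sum.group[OF finF[OF fin1] finite_atMost sub, symmetric])
  qed
  have step6: "\<And>t. t \<le> n \<Longrightarrow> card {g \<in> F V1 n. Mx g = t} = Omega V1 lt t - Omega V1 lt (t - 1)"
  proof -
    fix t assume t: "t \<le> n"
    show "card {g \<in> F V1 n. Mx g = t} = Omega V1 lt t - Omega V1 lt (t - 1)"
    proof (cases "t = 0")
      case True
      then have "{g \<in> F V1 n. Mx g = t} = {}" using rangeMx by fastforce
      then have "card {g \<in> F V1 n. Mx g = t} = 0" by (simp only: card.empty)
      then show ?thesis using True by simp
    next
      case False
      have memt: "\<And>k g. k \<le> n \<Longrightarrow> (g \<in> F V1 k) = (g \<in> F V1 n \<and> Mx g \<le> k)"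
        using Mx_le by (auto simp: F_def Fs_def PiE_def Pi_def)
      have "{g \<in> F V1 n. Mx g = t} = F V1 t - F V1 (t - 1)"
        using memt[of t] memt[of "t - 1"] t False by auto
      moreover have "F V1 (t - 1) \<subseteq> F V1 t" unfolding F_def by (rule Fs_mono) simp
      ultimately show ?thesis using finF[OF fin1] by (simp add: card_Diff_subset Omega_Fs F_def)
    qed
  qed
  have step7: "(\<Sum>t\<le>n. (\<Sum>g\<in>{g \<in> F V1 n. Mx g = t}. Omega V2 lt (n - Mx g))) =
      (\<Sum>t\<le>n. (Omega V1 lt t - Omega V1 lt (t - 1)) * Omega V2 lt (n - t))"
  proof (rule sum.cong)
    fix t assume t: "t \<in> {..n}"
    have "(\<Sum>g\<in>{g \<in> F V1 n. Mx g = t}. Omega V2 lt (n - Mx g)) =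
          (\<Sum>g\<in>{g \<in> F V1 n. Mx g = t}. Omega V2 lt (n - t))" by (rule sum.cong) auto
    also have "\<dots> = card {g \<in> F V1 n. Mx g = t} * Omega V2 lt (n - t)" by simp
    finally show "(\<Sum>g\<in>{g \<in> F V1 n. Mx g = t}. Omega V2 lt (n - Mx g)) =
      (Omega V1 lt t - Omega V1 lt (t - 1)) * Omega V2 lt (n - t)" using step6 t by simp
  qed simp
  have "Omega (V1 \<union> V2) lt n = card (F (V1 \<union> V2) n)" by (simp add: Omega_Fs F_def)
  then show ?thesis using step1 step2 step4 step5 step7 by simp
qed

lemma isolated_count:
  assumes fin: "finite V" and pV: "p \<notin> V" and irr: "\<not> lt p p"
    and inc: "\<And>v. v \<in> V \<Longrightarrow> \<not> lt p v \<and> \<not> lt v p"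
  shows "Omega (insert p V) lt n = n * Omega V lt n"
proof -
  let ?A = "Fs (insert p V) lt {1..n}" and ?B = "{1..n} \<times> Fs V lt {1..n}"
  have "bij_betw (\<lambda>f. (f p, restrict f V)) ?A ?B"
  proof (rule bij_betw_byWitness[where f'="\<lambda>(a, g). g(p := a)"])
    show "\<forall>f\<in>?A. (\<lambda>(a, g). g(p := a)) (f p, restrict f V) = f"
    proof
      fix f assume f: "f \<in> ?A"
      show "(\<lambda>(a, g). g(p := a)) (f p, restrict f V) = f"
      proof
        fix x show "(\<lambda>(a, g). g(p := a)) (f p, restrict f V) x = f x"
          using f by (auto simp: Fs_def PiE_def extensional_def)
      qed
    qed
    show "\<forall>b\<in>?B. (\<lambda>f. (f p, restrict f V)) ((\<lambda>(a, g). g(p := a)) b) = b"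
    proof
      fix b assume b: "b \<in> ?B"
      obtain a g where ag: "b = (a, g)" by (cases b)
      have g: "g \<in> Fs V lt {1..n}" using b ag by auto
      have "restrict (g(p := a)) V = g"
      proof
        fix x show "restrict (g(p := a)) V x = g x"
          using g pV by (auto simp: Fs_def PiE_def extensional_def)
      qed
      then show "(\<lambda>f. (f p, restrict f V)) ((\<lambda>(a, g). g(p := a)) b) = b" using ag by simp
    qed
    show "(\<lambda>f. (f p, restrict f V)) ` ?A \<subseteq> ?B"
      by (auto simp: Fs_def)
    show "(\<lambda>(a, g). g(p := a)) ` ?B \<subseteq> ?A"
    proof
      fix q assume "q \<in> (\<lambda>(a, g). g(p := a)) ` ?B"
      then obtain a g where a: "a \<in> {1..n}" and g: "g \<in> Fs V lt {1..n}" and q: "q = g(p := a)"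
        by auto
      have pi: "q \<in> insert p V \<rightarrow>\<^sub>E {1..n}"
        using a g pV unfolding q by (auto simp: Fs_def PiE_def extensional_def)
      have st: "\<forall>u\<in>insert p V. \<forall>v\<in>insert p V. lt u v \<longrightarrow> q u < q v"
      proof (intro ballI impI)
        fix u v assume u: "u \<in> insert p V" and v: "v \<in> insert p V" and l: "lt u v"
        have "u \<noteq> p" using l irr inc v by auto
        moreover have "v \<noteq> p" using l irr inc u by auto
        ultimately show "q u < q v" using u v l g unfolding q by (auto simp: Fs_def)
      qed
      show "q \<in> ?A" using pi st by (simp add: Fs_def)
    qed
  qed
  then have "card ?A = card ?B" by (rule bij_betw_same_card)
  then show ?thesis by (simp add: Omega_Fs card_cartesian_product)
qed




lemma Zser_ne: "V \<noteq> {} \<Longrightarrow> Zser V lt = Abs_fps (\<lambda>n. real (Omega V lt n))"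
  unfolding Zser_def by (rule fps_ext) (simp add: Omega_zero)

lemma Omega_mono: "finite V \<Longrightarrow> m \<le> n \<Longrightarrow> Omega V lt m \<le> Omega V lt n"
  unfolding Omega_Fs by (intro card_mono finite_Fs Fs_mono) auto

lemma Zser_concat:
  assumes fin1: "finite V1" and fin2: "finite V2" and ne1: "V1 \<noteq> {}" and ne2: "V2 \<noteq> {}"
    and disj: "V1 \<inter> V2 = {}"
    and up: "\<And>u v. u \<in> V1 \<Longrightarrow> v \<in> V2 \<Longrightarrow> lt u v"
    and down: "\<And>u v. u \<in> V2 \<Longrightarrow> v \<in> V1 \<Longrightarrow> \<not> lt u v"
  shows "Zser (V1 \<union> V2) lt = (1 - fps_X) * Zser V1 lt * Zser V2 lt"
proof (rule fps_ext)
  fix n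
  have ne: "V1 \<union> V2 \<noteq> {}" using ne1 by auto
  have c1: "\<And>i. fps_nth ((1 - fps_X) * Zser V1 lt) i = real (Omega V1 lt i) - real (Omega V1 lt (i - 1))"
    using ne1 by (simp add: Zser_ne algebra_simps fps_X_mult_nth Omega_zero)
  have "fps_nth ((1 - fps_X) * Zser V1 lt * Zser V2 lt) n =
      (\<Sum>i=0..n. (real (Omega V1 lt i) - real (Omega V1 lt (i - 1))) * real (Omega V2 lt (n - i)))"
    unfolding fps_mult_nth[of "(1 - fps_X) * Zser V1 lt"] c1
    using ne2 by (simp add: Zser_ne)
  also have "\<dots> = (\<Sum>i\<le>n. real ((Omega V1 lt i - Omega V1 lt (i - 1)) * Omega V2 lt (n - i)))"
    using Omega_mono[OF fin1, of "_ - 1" _ lt] by (simp add: atLeast0AtMost of_nat_diff)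
  also have "\<dots> = real (Omega (V1 \<union> V2) lt n)"
    by (simp only: concat_count[OF assms] of_nat_sum)
  finally show "fps_nth (Zser (V1 \<union> V2) lt) n = fps_nth ((1 - fps_X) * Zser V1 lt * Zser V2 lt) n"
    using ne by (simp add: Zser_ne)
qed

lemma Zser_singleton: "\<not> lt p p \<Longrightarrow> Zser {p} lt = zeta 1"
  by (rule fps_ext) (simp add: Zser_ne Omega_singleton zeta_nth)




fun Kf :: "wword \<Rightarrow> nat" where
  "Kf One = 1" | "Kf (Mu a b) = Kf a + Kf b" | "Kf (Dh a) = Kf a + 3"

fun Lf :: "wword \<Rightarrow> nat" where
  "Lf One = 1" | "Lf (Mu a b) = Lf a + Lf b" | "Lf (Dh a) = Lf a + 2"

fun cw :: "wword \<Rightarrow> nat \<Rightarrow> nat" where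
  "cw One j = (if j = 1 then 1 else 0)"
| "cw (Mu a b) j = (\<Sum>p\<le>j. cw a p * cw b (j - p))"
| "cw (Dh a) j = (if j < 2 then 0 else (j - 2) * (cw a (j - 2) + cw a (j - 3)))"

lemma cw_Dh_SS: "cw (Dh a) (Suc (Suc r)) = r * (cw a r + cw a (r - 1))"
  by (simp add: numeral_3_eq_3)

lemma LK: "1 \<le> Lf w \<and> Lf w \<le> Kf w"
  by (induction w) auto

lemma cw_support: "cw w j \<noteq> 0 \<Longrightarrow> Lf w \<le> j \<and> j \<le> Kf w"
proof (induction w arbitrary: j)
  case One then show ?case by (simp split: if_splits)
next
  case (Mu a b)
  then obtain p where p: "p \<le> j" "cw a p \<noteq> 0" "cw b (j - p) \<noteq> 0" by (auto simp: sum_eq_0_iff)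
  then show ?case using Mu.IH[of p] Mu.IH(2)[of "j - p"] by auto
next
  case (Dh a)
  then have j: "2 \<le> j" and "cw a (j - 2) \<noteq> 0 \<or> cw a (j - 3) \<noteq> 0" by (auto split: if_splits)
  then show ?case using Dh.IH[of "j - 2"] Dh.IH[of "j - 3"] LK[of a] by auto
qed

lemma cw_ends: "cw w (Lf w) \<noteq> 0 \<and> cw w (Kf w) \<noteq> 0"
proof (induction w)
  case One then show ?case by simp
next
  case (Mu a b)
  have gen: "cw (Mu a b) (x + y) \<noteq> 0" if "cw a x \<noteq> 0" "cw b y \<noteq> 0" for x y
  proof -
    have "cw a x * cw b (x + y - x) \<noteq> 0" using that by simp
    moreover have "x \<in> {..x + y}" by simp
    ultimately have "(\<Sum>p\<le>x + y. cw a p * cw b (x + y - p)) \<noteq> 0"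
      by (metis (no_types, lifting) finite_atMost sum_eq_0_iff)
    then show ?thesis by simp
  qed
  have "cw (Mu a b) (Lf a + Lf b) \<noteq> 0" using Mu.IH gen by blast
  moreover have "cw (Mu a b) (Kf a + Kf b) \<noteq> 0" using Mu.IH gen by blast
  ultimately show ?case by simp
next
  case (Dh a)
  then show ?case using LK[of a] by (simp add: numeral_3_eq_3)
qed

lemma cw_zero_above: "Kf w < j \<Longrightarrow> cw w j = 0"
  using cw_support by fastforce

lemma cw_zero_0: "cw w 0 = 0"
proof (rule ccontr)
  assume "cw w 0 \<noteq> 0"
  then show False using cw_support[of w 0] LK[of w] by simp
qed

lemma cauchy_fin:
  fixes F :: "nat \<Rightarrow> nat \<Rightarrow> 'a::comm_monoid_add"
  assumes "\<And>p q. K1 < p \<or> K2 < q \<Longrightarrow> F p q = 0"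
  shows "(\<Sum>p\<le>K1. \<Sum>q\<le>K2. F p q) = (\<Sum>j\<le>K1+K2. \<Sum>p\<le>j. F p (j - p))"
proof -
  have "(\<Sum>p\<le>K1. \<Sum>q\<le>K2. F p q) = (\<Sum>(p,q)\<in>{..K1}\<times>{..K2}. F p q)"
    by (simp add: sum.cartesian_product)
  also have "\<dots> = (\<Sum>(p,q)\<in>{(p,q). p + q \<le> K1 + K2}. F p q)"
  proof (rule sum.mono_neutral_left)
    show "finite {(p,q). p + q \<le> K1 + K2}"
      by (rule finite_subset[of _ "{..K1+K2}\<times>{..K1+K2}"]) auto
    show "{..K1}\<times>{..K2} \<subseteq> {(p,q). p + q \<le> K1 + K2}" by auto
    show "\<forall>i\<in>{(p,q). p + q \<le> K1 + K2} - {..K1}\<times>{..K2}. (case i of (p,q) \<Rightarrow> F p q) = 0"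
    proof
      fix i assume i: "i \<in> {(p,q). p + q \<le> K1 + K2} - {..K1}\<times>{..K2}"
      obtain p q where pq: "i = (p, q)" by (cases i)
      with i have "K1 < p \<or> K2 < q" by auto
      then show "(case i of (p,q) \<Rightarrow> F p q) = 0" using assms pq by simp
    qed
  qed
  also have "\<dots> = (\<Sum>j\<le>K1+K2. \<Sum>p\<le>j. F p (j - p))"
    by (rule sum.triangle_reindex_eq)
  finally show ?thesis .
qed

lemma binom_key: "j * (n choose j) + Suc j * (n choose Suc j) = n * (n choose j)"
proof -
  have a: "Suc j * (n choose Suc j) = (n - j) * (n choose j)"
  proof (cases n)
    case 0 then show ?thesis by simp
  next
    case (Suc n')
    then show ?thesis using Suc_times_binomial[of j n'] binomial_absorb_comp[of "Suc n'" j] by simp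
  qed
  show ?thesis
  proof (cases "j \<le> n")
    case True
    then show ?thesis using a by (simp add: add_mult_distrib[symmetric])
  next
    case False
    then show ?thesis using a by (simp add: binomial_eq_0)
  qed
qed

lemma coeff_id:
  fixes f :: "nat \<Rightarrow> nat"
  assumes "f (Suc K) = 0"
  shows "n * (\<Sum>j\<le>K. f j * (n choose j)) = (\<Sum>j\<le>Suc K. j * (f j + f (j - 1)) * (n choose j))"
proof -
  have "(\<Sum>j\<le>Suc K. j * (f j + f (j - 1)) * (n choose j)) =
        (\<Sum>j\<le>Suc K. j * f j * (n choose j)) + (\<Sum>j\<le>Suc K. j * f (j - 1) * (n choose j))"
    by (simp add: sum.distrib algebra_simps)
  also have "(\<Sum>j\<le>Suc K. j * f j * (n choose j)) = (\<Sum>j\<le>K. j * f j * (n choose j))"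
    using assms by simp
  also have "(\<Sum>j\<le>Suc K. j * f (j - 1) * (n choose j)) = (\<Sum>j\<le>K. Suc j * f j * (n choose Suc j))"
    by (simp only: sum.atMost_Suc_shift) simp
  also have "(\<Sum>j\<le>K. j * f j * (n choose j)) + (\<Sum>j\<le>K. Suc j * f j * (n choose Suc j))
      = (\<Sum>j\<le>K. f j * (j * (n choose j) + Suc j * (n choose Suc j)))"
    by (simp add: sum.distrib algebra_simps)
  also have "\<dots> = (\<Sum>j\<le>K. f j * (n * (n choose j)))" by (simp only: binom_key)
  finally show ?thesis by (simp add: sum_distrib_left algebra_simps)
qed




lemma wcar_fin: "finite (wcar w)" by (induction w) auto
lemma wcar_ne: "wcar w \<noteq> {}" by (induction w) auto

lemma wless_car: "wless w x y \<Longrightarrow> x \<in> wcar w \<and> y \<in> wcar w"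
proof (induction w arbitrary: x y)
  case One then show ?case by simp
next
  case (Mu a b) then show ?case by (cases x; cases y) (auto simp: image_iff)
next
  case (Dh a) then show ?case by (cases x; cases y) (auto simp: image_iff)
qed

lemma card_wcar: "card (wcar w) = Kf w"
proof (induction w)
  case One then show ?case by simp
next
  case (Mu a b)
  have "card (Cons 0 ` wcar a \<union> Cons 1 ` wcar b) = card (Cons 0 ` wcar a) + card (Cons 1 ` wcar b)"
    by (rule card_Un_disjoint) (auto simp: wcar_fin)
  also have "\<dots> = card (wcar a) + card (wcar b)" by (simp add: card_image)
  finally show ?case using Mu by simp
next
  case (Dh a)
  have "card ({[2], [3], [4]} \<union> Cons 0 ` wcar a) = card {[2::nat], [3], [4]} + card (Cons 0 ` wcar a)"
    by (rule card_Un_disjoint) (auto simp: wcar_fin)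
  also have "\<dots> = 3 + card (wcar a)" by (simp add: card_image)
  finally show ?case using Dh by simp
qed

lemma Zser_eqI:
  assumes h: "\<And>n. Omega V lt n = Omega V' lt' n"
  shows "Zser V lt = Zser V' lt'"
  unfolding Zser_def by (rule arg_cong[where f=Abs_fps]) (rule ext, simp only: h)

lemma Om_Mu0: "Omega (Cons 0 ` wcar a) (wless (Mu a b)) n = Omega (wcar a) (wless a) n"
  by (subst Omega_relabel) (auto intro: Omega_cong)
lemma Om_Mu1: "Omega (Cons 1 ` wcar b) (wless (Mu a b)) n = Omega (wcar b) (wless b) n"
  by (subst Omega_relabel) (auto intro: Omega_cong)
lemma Om_Dh0: "Omega (Cons 0 ` wcar a) (wless (Dh a)) n = Omega (wcar a) (wless a) n"
  by (subst Omega_relabel) (auto intro: Omega_cong)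

lemma Z_coeff:
  assumes "Zser V lt = (\<Sum>j\<le>K. of_nat (c j) * zeta j)" and "V \<noteq> {}"
  shows "Omega V lt n = (\<Sum>j\<le>K. c j * (n choose j))"
proof -
  have "real (Omega V lt n) = fps_nth (Zser V lt) n" using assms(2) by (simp add: Zser_ne)
  also have "\<dots> = (\<Sum>j\<le>K. real (c j) * real (n choose j))"
    unfolding assms(1) fps_sum_nth by (simp add: fps_of_nat[symmetric] zeta_nth)
  finally show ?thesis by (metis (mono_tags, lifting) of_nat_eq_iff of_nat_mult of_nat_sum sum.cong)
qed

theorem Z_word: "Zser (wcar w) (wless w) = (\<Sum>j\<le>Kf w. of_nat (cw w j) * zeta j)"
proof (induction w)
  case One
  show ?case
  proof (rule fps_ext)
    fix n
    show "fps_nth (Zser (wcar One) (wless One)) n = fps_nth (\<Sum>j\<le>Kf One. of_nat (cw One j) * zeta j) n"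
      by (simp add: Zser_ne Omega_singleton fps_sum_nth fps_of_nat[symmetric] zeta_nth)
  qed
next
  case (Mu a b)
  let ?lt = "wless (Mu a b)"
  let ?A = "\<lambda>p. of_nat (cw a p) * zeta p" and ?B = "\<lambda>q. of_nat (cw b q) * zeta q"
  have "Zser (wcar (Mu a b)) ?lt = (1 - fps_X) * Zser (Cons 0 ` wcar a) ?lt * Zser (Cons 1 ` wcar b) ?lt"
    unfolding wcar.simps by (rule Zser_concat) (auto simp: wcar_fin wcar_ne)
  also have "\<dots> = (1 - fps_X) * Zser (wcar a) (wless a) * Zser (wcar b) (wless b)"
    by (simp only: Zser_eqI[OF Om_Mu0] Zser_eqI[OF Om_Mu1])
  also have "\<dots> = (\<Sum>p\<le>Kf a. \<Sum>q\<le>Kf b. (1 - fps_X) * (?A p * ?B q))"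
  proof -
    have e: "(\<Sum>p\<le>Kf a. ?A p) * (\<Sum>q\<le>Kf b. ?B q) = (\<Sum>p\<le>Kf a. \<Sum>q\<le>Kf b. ?A p * ?B q)"
      by (rule sum_product)
    have "(1 - fps_X) * (\<Sum>p\<le>Kf a. ?A p) * (\<Sum>q\<le>Kf b. ?B q) =
       (1 - fps_X) * (\<Sum>p\<le>Kf a. \<Sum>q\<le>Kf b. ?A p * ?B q)"
      by (simp only: mult.assoc[of "1 - fps_X"] e)
    then show ?thesis unfolding Mu.IH by (simp only: sum_distrib_left)
  qed
  also have "\<dots> = (\<Sum>p\<le>Kf a. \<Sum>q\<le>Kf b. of_nat (cw a p * cw b q) * zeta (p + q))"
  proof (intro sum.cong refl)
    fix p q
    have "(1 - fps_X) * (?A p * ?B q) = of_nat (cw a p * cw b q) * ((1 - fps_X) * zeta p * zeta q)"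
      by (simp add: algebra_simps)
    then show "(1 - fps_X) * (?A p * ?B q) = of_nat (cw a p * cw b q) * zeta (p + q)"
      by (simp only: zeta_mult)
  qed
  also have "\<dots> = (\<Sum>j\<le>Kf a + Kf b. \<Sum>p\<le>j. of_nat (cw a p * cw b (j - p)) * zeta (p + (j - p)))"
    by (rule cauchy_fin) (auto simp: cw_zero_above)
  also have "\<dots> = (\<Sum>j\<le>Kf a + Kf b. of_nat (cw (Mu a b) j) * zeta j)"
  proof (rule sum.cong[OF refl])
    fix j
    have "(\<Sum>p\<le>j. of_nat (cw a p * cw b (j - p)) * zeta (p + (j - p))) =
          (\<Sum>p\<le>j. of_nat (cw a p * cw b (j - p)) * (zeta j :: real fps))"
      by (rule sum.cong) auto
    also have "\<dots> = of_nat (cw (Mu a b) j) * zeta j"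
      by (simp add: sum_distrib_right)
    finally show "(\<Sum>p\<le>j. of_nat (cw a p * cw b (j - p)) * zeta (p + (j - p))) =
          of_nat (cw (Mu a b) j) * zeta j" .
  qed
  finally show ?case by (simp only: Kf.simps)
next
  case (Dh a)
  let ?lt = "wless (Dh a)"
  let ?N = "insert [4] (Cons 0 ` wcar a)"
  let ?m = "\<lambda>j. j * (cw a j + cw a (j - 1))"
  have car: "wcar (Dh a) = {[2]} \<union> (?N \<union> {[3]})" by auto
  have "Zser (wcar (Dh a)) ?lt = (1 - fps_X) * Zser {[2]} ?lt * Zser (?N \<union> {[3]}) ?lt"
    unfolding car by (rule Zser_concat) (auto simp: wcar_fin)
  also have "Zser (?N \<union> {[3]}) ?lt = (1 - fps_X) * Zser ?N ?lt * Zser {[3]} ?lt"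
    by (rule Zser_concat) (auto simp: wcar_fin)
  also have "Zser {[2]} ?lt = zeta 1" by (rule Zser_singleton) simp
  also have "Zser {[3]} ?lt = zeta 1" by (rule Zser_singleton) simp
  also have "Zser ?N ?lt = (\<Sum>j\<le>Suc (Kf a). of_nat (?m j) * zeta j)"
  proof (rule fps_ext)
    fix n
    have "Omega ?N ?lt n = n * Omega (Cons 0 ` wcar a) ?lt n"
      by (rule isolated_count) (auto simp: wcar_fin)
    also have "\<dots> = n * (\<Sum>j\<le>Kf a. cw a j * (n choose j))"
      using Z_coeff[OF Dh.IH wcar_ne] by (simp add: Om_Dh0)
    also have "\<dots> = (\<Sum>j\<le>Suc (Kf a). ?m j * (n choose j))"
      by (rule coeff_id) (simp add: cw_zero_above)
    finally have calc: "Omega ?N ?lt n = (\<Sum>j\<le>Suc (Kf a). ?m j * (n choose j))" .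
    have L: "fps_nth (\<Sum>j\<le>Suc (Kf a). of_nat (?m j) * zeta j) n = real (\<Sum>j\<le>Suc (Kf a). ?m j * (n choose j))"
      unfolding fps_sum_nth of_nat_sum by (rule sum.cong) (simp_all add: fps_of_nat[symmetric] zeta_nth)
    have ne: "?N \<noteq> {}" by simp
    show "fps_nth (Zser ?N ?lt) n = fps_nth (\<Sum>j\<le>Suc (Kf a). of_nat (?m j) * zeta j) n"
      unfolding Zser_ne[OF ne] fps_nth_Abs_fps L using calc by (simp only: of_nat_eq_iff)
  qed
  finally have "Zser (wcar (Dh a)) ?lt =
      (1 - fps_X) * zeta 1 * ((1 - fps_X) * (\<Sum>j\<le>Suc (Kf a). of_nat (?m j) * zeta j) * zeta 1)" .
  also have "\<dots> = (\<Sum>j\<le>Suc (Kf a). (1 - fps_X) * zeta 1 * ((1 - fps_X) * (of_nat (?m j) * zeta j) * zeta 1))"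
    by (simp only: sum_distrib_left sum_distrib_right)
  also have "\<dots> = (\<Sum>j\<le>Suc (Kf a). of_nat (?m j) * zeta (Suc (Suc j)))"
  proof (rule sum.cong[OF refl])
    fix j
    have "(1 - fps_X) * zeta 1 * ((1 - fps_X) * (of_nat (?m j) * zeta j) * zeta 1) =
       of_nat (?m j) * ((1 - fps_X) * zeta 1 * ((1 - fps_X) * zeta j * zeta 1))"
      by (simp only: ac_simps)
    also have "\<dots> = of_nat (?m j) * zeta (Suc (Suc j))"
      by (simp add: zeta_mult)
    finally show "(1 - fps_X) * zeta 1 * ((1 - fps_X) * (of_nat (?m j) * zeta j) * zeta 1) =
       of_nat (?m j) * zeta (Suc (Suc j))" .
  qed
  also have "\<dots> = (\<Sum>j\<le>Kf (Dh a). of_nat (cw (Dh a) j) * zeta j)"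
  proof -
    have k: "Kf (Dh a) = Suc (Suc (Suc (Kf a)))" by simp
    have z0: "cw (Dh a) 0 = 0" and z1: "cw (Dh a) (Suc 0) = 0" by simp_all
    show ?thesis unfolding k sum.atMost_Suc_shift[of _ "Suc (Suc (Kf a))"] sum.atMost_Suc_shift[of _ "Suc (Kf a)"]
      by (simp only: z0 z1 cw_Dh_SS) simp
  qed
  finally show ?case .
qed




lemma alt_word: "(\<Sum>u\<le>Kf w. (-1::int) ^ u * int (cw w u)) = (-1) ^ Kf w"
proof (induction w)
  case One then show ?case by (simp add: atMost_Suc)
next
  case (Mu a b)
  let ?F = "\<lambda>p q. ((-1::int) ^ p * int (cw a p)) * ((-1) ^ q * int (cw b q))"
  have "(\<Sum>u\<le>Kf (Mu a b). (-1::int) ^ u * int (cw (Mu a b) u)) =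
        (\<Sum>j\<le>Kf a + Kf b. \<Sum>p\<le>j. ?F p (j - p))"
  proof (simp only: Kf.simps, rule sum.cong[OF refl])
    fix j
    have "(-1::int) ^ j * int (cw (Mu a b) j) = (\<Sum>p\<le>j. (-1::int) ^ j * (int (cw a p) * int (cw b (j - p))))"
      by (simp add: sum_distrib_left)
    also have "\<dots> = (\<Sum>p\<le>j. ?F p (j - p))"
    proof (rule sum.cong[OF refl])
      fix p assume "p \<in> {..j}"
      then have "(-1::int) ^ j = (-1) ^ p * (-1) ^ (j - p)"
        by (simp add: power_add[symmetric])
      then show "(-1::int) ^ j * (int (cw a p) * int (cw b (j - p))) = ?F p (j - p)"
        by (simp add: ac_simps)
    qed
    finally show "(-1::int) ^ j * int (cw (Mu a b) j) = (\<Sum>p\<le>j. ?F p (j - p))" .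
  qed
  also have "\<dots> = (\<Sum>p\<le>Kf a. \<Sum>q\<le>Kf b. ?F p q)"
    by (rule cauchy_fin[symmetric]) (auto simp: cw_zero_above)
  also have "\<dots> = (\<Sum>p\<le>Kf a. (-1::int) ^ p * int (cw a p)) * (\<Sum>q\<le>Kf b. (-1::int) ^ q * int (cw b q))"
    by (rule sum_product[symmetric])
  also have "\<dots> = (-1) ^ Kf (Mu a b)" using Mu.IH by (simp add: power_add)
  finally show ?case .
next
  case (Dh a)
  let ?K = "Kf a"
  let ?f = "\<lambda>r. (-1::int) ^ r * int (cw a r)"
  have k: "Kf (Dh a) = Suc (Suc (Suc ?K))" by simp
  have z0: "cw (Dh a) 0 = 0" and z1: "cw (Dh a) (Suc 0) = 0" by simp_all
  have "(\<Sum>u\<le>Kf (Dh a). (-1::int) ^ u * int (cw (Dh a) u)) =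
        (\<Sum>r\<le>Suc ?K. (-1::int) ^ Suc (Suc r) * int (cw (Dh a) (Suc (Suc r))))"
    unfolding k sum.atMost_Suc_shift[of _ "Suc (Suc ?K)"] sum.atMost_Suc_shift[of _ "Suc ?K"]
    by (simp only: z0 z1)
  also have "\<dots> = (\<Sum>r\<le>Suc ?K. int r * ?f r) + (\<Sum>r\<le>Suc ?K. (-1::int) ^ r * int r * int (cw a (r - 1)))"
    by (simp only: cw_Dh_SS sum.distrib[symmetric]) (rule sum.cong, auto simp: algebra_simps)
  also have "(\<Sum>r\<le>Suc ?K. int r * ?f r) = (\<Sum>r\<le>?K. int r * ?f r)"
    by (simp add: cw_zero_above)
  also have "(\<Sum>r\<le>Suc ?K. (-1::int) ^ r * int r * int (cw a (r - 1))) = (\<Sum>r\<le>?K. - (int r + 1) * ?f r)"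
    by (simp only: sum.atMost_Suc_shift) (simp add: algebra_simps)
  also have "(\<Sum>r\<le>?K. int r * ?f r) + (\<Sum>r\<le>?K. - (int r + 1) * ?f r) = - (\<Sum>r\<le>?K. ?f r)"
    by (simp add: sum.distrib[symmetric] sum_negf[symmetric] algebra_simps)
  also have "\<dots> = (-1) ^ Kf (Dh a)" using Dh.IH by (simp add: power_add)
  finally show ?case .
qed




lemma wless_irrefl: "\<not> wless w x x"
  by (induction w arbitrary: x) auto

lemma wless_asym: "wless w x y \<Longrightarrow> \<not> wless w y x"
  by (induction w arbitrary: x y) auto

fun bt :: "wword \<Rightarrow> nat list" where
  "bt One = []" | "bt (Mu a b) = 0 # bt a" | "bt (Dh a) = [2]"
fun tp :: "wword \<Rightarrow> nat list" where
  "tp One = []" | "tp (Mu a b) = 1 # tp b" | "tp (Dh a) = [3]"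

lemma bt_in: "bt w \<in> wcar w" by (induction w) auto
lemma tp_in: "tp w \<in> wcar w" by (induction w) auto

lemma bt_least: "x \<in> wcar w \<Longrightarrow> x \<noteq> bt w \<Longrightarrow> wless w (bt w) x"
proof (induction w arbitrary: x)
  case One then show ?case by simp
next
  case (Mu a b) then show ?case using bt_in[of a] by auto
next
  case (Dh a) then show ?case by auto
qed

lemma tp_greatest: "x \<in> wcar w \<Longrightarrow> x \<noteq> tp w \<Longrightarrow> wless w x (tp w)"
proof (induction w arbitrary: x)
  case One then show ?case by simp
next
  case (Mu a b) then show ?case using tp_in[of b] by auto
next
  case (Dh a) then show ?case by auto
qed

lemma not_below_bt: "\<not> wless w x (bt w)"
  using bt_least wless_asym wless_car wless_irrefl by metis

lemma not_above_tp: "\<not> wless w (tp w) x"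
  using tp_greatest wless_asym wless_car wless_irrefl by metis



lemma LK_card: "Lf w \<ge> 1" using LK by auto

lemma chain_proj:
  assumes ch: "is_chain_in V lt C"
    and h: "\<And>x y. x \<in> A \<Longrightarrow> y \<in> A \<Longrightarrow> lt (k#x) (k#y) \<Longrightarrow> lt' x y"
  shows "is_chain_in A lt' (tl ` (C \<inter> Cons k ` A))"
    and "card (C \<inter> Cons k ` A) = card (tl ` (C \<inter> Cons k ` A))"
proof -
  show "is_chain_in A lt' (tl ` (C \<inter> Cons k ` A))"
    unfolding is_chain_in_def
  proof (intro conjI ballI impI)
    show "tl ` (C \<inter> Cons k ` A) \<subseteq> A" by auto
  next
    fix x y assume x: "x \<in> tl ` (C \<inter> Cons k ` A)" and y: "y \<in> tl ` (C \<inter> Cons k ` A)" and ne: "x \<noteq> y"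
    from x have x': "k#x \<in> C" "x \<in> A" by auto
    from y have y': "k#y \<in> C" "y \<in> A" by auto
    have "lt (k#x) (k#y) \<or> lt (k#y) (k#x)" using ch x' y' ne unfolding is_chain_in_def by auto
    then show "lt' x y \<or> lt' y x" using h x' y' by blast
  qed
  have "inj_on tl (C \<inter> Cons k ` A)" by (auto simp: inj_on_def)
  then show "card (C \<inter> Cons k ` A) = card (tl ` (C \<inter> Cons k ` A))" by (simp add: card_image)
qed

lemma chain_fin: "is_chain_in (wcar w) lt C \<Longrightarrow> finite C"
  unfolding is_chain_in_def using wcar_fin finite_subset by blast

lemma chain_bound: "is_chain_in (wcar w) (wless w) C \<Longrightarrow> card C \<le> Lf w"
proof (induction w arbitrary: C)
  case One
  then have "C \<subseteq> {[]}" by (simp add: is_chain_in_def)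
  then have "card C \<le> card {[]::nat list}" by (rule card_mono[rotated]) simp
  then show ?case by simp
next
  case (Mu a b)
  let ?C0 = "C \<inter> Cons 0 ` wcar a" and ?C1 = "C \<inter> Cons 1 ` wcar b"
  have p0: "is_chain_in (wcar a) (wless a) (tl ` ?C0)" "card ?C0 = card (tl ` ?C0)"
    by (rule chain_proj[OF Mu.prems], simp)+
  have p1: "is_chain_in (wcar b) (wless b) (tl ` ?C1)" "card ?C1 = card (tl ` ?C1)"
    by (rule chain_proj[OF Mu.prems], simp)+
  have "C = ?C0 \<union> ?C1" using Mu.prems by (auto simp: is_chain_in_def)
  then have "card C \<le> card ?C0 + card ?C1" by (metis card_Un_le)
  moreover have "card (tl ` ?C0) \<le> Lf a" by (rule Mu.IH(1)[OF p0(1)])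
  moreover have "card (tl ` ?C1) \<le> Lf b" by (rule Mu.IH(2)[OF p1(1)])
  ultimately show ?case using p0(2) p1(2) by simp
next
  case (Dh a)
  let ?C0 = "C \<inter> Cons 0 ` wcar a"
  have p0: "is_chain_in (wcar a) (wless a) (tl ` ?C0)" "card ?C0 = card (tl ` ?C0)"
    by (rule chain_proj[OF Dh.prems], simp)+
  have b0: "card ?C0 \<le> Lf a" using p0(2) Dh.IH[OF p0(1)] by simp
  have fin0: "finite ?C0" using chain_fin[OF Dh.prems] by simp
  show ?case
  proof (cases "[4] \<in> C")
    case True
    have "?C0 = {}"
    proof (rule ccontr)
      assume "?C0 \<noteq> {}"
      then obtain x where x: "0 # x \<in> C" "x \<in> wcar a" by auto
      have ne4: "[4] \<noteq> 0 # x" by simp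
      have "\<forall>x\<in>C. \<forall>y\<in>C. x \<noteq> y \<longrightarrow> wless (Dh a) x y \<or> wless (Dh a) y x"
        using Dh.prems unfolding is_chain_in_def by (elim conjE)
      then have "wless (Dh a) [4] (0#x) \<or> wless (Dh a) (0#x) [4]"
        using True x(1) ne4 by blast
      then show False by auto
    qed
    then have "C \<subseteq> {[2], [3], [4]}" using Dh.prems by (auto simp: is_chain_in_def)
    then have "card C \<le> card {[2::nat], [3], [4]}" by (rule card_mono[rotated]) simp
    also have "\<dots> = 3" by simp
    finally show ?thesis using LK_card[of a] by simp
  next
    case False
    then have "C \<subseteq> {[2], [3]} \<union> ?C0" using Dh.prems by (auto simp: is_chain_in_def)
    then have "card C \<le> card ({[2::nat], [3]} \<union> ?C0)" by (rule card_mono[rotated]) (simp add: fin0)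
    also have "\<dots> \<le> card {[2::nat], [3]} + card ?C0" by (rule card_Un_le)
    also have "\<dots> \<le> 2 + Lf a" using b0 by simp
    finally show ?thesis by simp
  qed
qed



lemma chain_exists: "\<exists>C. is_chain_in (wcar w) (wless w) C \<and> card C = Lf w"
proof (induction w)
  case One
  show ?case by (rule exI[of _ "{[]}"]) (simp add: is_chain_in_def)
next
  case (Mu a b)
  obtain CA where CA: "is_chain_in (wcar a) (wless a) CA" "card CA = Lf a" using Mu.IH(1) by blast
  obtain CB where CB: "is_chain_in (wcar b) (wless b) CB" "card CB = Lf b" using Mu.IH(2) by blast
  let ?C = "Cons 0 ` CA \<union> Cons 1 ` CB"
  have sA: "CA \<subseteq> wcar a" and cA: "\<forall>x\<in>CA. \<forall>y\<in>CA. x \<noteq> y \<longrightarrow> wless a x y \<or> wless a y x"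
    using CA(1) unfolding is_chain_in_def by blast+
  have sB: "CB \<subseteq> wcar b" and cB: "\<forall>x\<in>CB. \<forall>y\<in>CB. x \<noteq> y \<longrightarrow> wless b x y \<or> wless b y x"
    using CB(1) unfolding is_chain_in_def by blast+
  have "is_chain_in (wcar (Mu a b)) (wless (Mu a b)) ?C"
    unfolding is_chain_in_def
  proof (intro conjI ballI impI)
    show "?C \<subseteq> wcar (Mu a b)" using sA sB by auto
  next
    fix x y assume x: "x \<in> ?C" and y: "y \<in> ?C" and ne: "x \<noteq> y"
    from x consider (xa) x' where "x = 0#x'" "x' \<in> CA" | (xb) x' where "x = 1#x'" "x' \<in> CB" by blast
    then show "wless (Mu a b) x y \<or> wless (Mu a b) y x"
    proof cases
      case xa
      from y consider (ya) y' where "y = 0#y'" "y' \<in> CA" | (yb) y' where "y = 1#y'" "y' \<in> CB" by blast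
      then show ?thesis
      proof cases
        case ya then show ?thesis using xa ne cA by simp
      next
        case yb then show ?thesis using xa sA sB by auto
      qed
    next
      case xb
      from y consider (ya) y' where "y = 0#y'" "y' \<in> CA" | (yb) y' where "y = 1#y'" "y' \<in> CB" by blast
      then show ?thesis
      proof cases
        case ya then show ?thesis using xb sA sB by auto
      next
        case yb then show ?thesis using xb ne cB by simp
      qed
    qed
  qed
  moreover have "card ?C = Lf a + Lf b"
  proof -
    have "card ?C = card (Cons 0 ` CA) + card (Cons 1 ` CB)"
      by (rule card_Un_disjoint) (use chain_fin[OF CA(1)] chain_fin[OF CB(1)] in auto)
    then show ?thesis using CA(2) CB(2) by (simp add: card_image)
  qed
  ultimately show ?case unfolding Lf.simps by blast
next
  case (Dh a)
  obtain CA where CA: "is_chain_in (wcar a) (wless a) CA" "card CA = Lf a" using Dh.IH by blast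
  let ?C = "{[2], [3]} \<union> Cons 0 ` CA"
  have sA: "CA \<subseteq> wcar a" and cA: "\<forall>x\<in>CA. \<forall>y\<in>CA. x \<noteq> y \<longrightarrow> wless a x y \<or> wless a y x"
    using CA(1) unfolding is_chain_in_def by blast+
  have "is_chain_in (wcar (Dh a)) (wless (Dh a)) ?C"
    unfolding is_chain_in_def
  proof (intro conjI ballI impI)
    show "?C \<subseteq> wcar (Dh a)" using sA by auto
  next
    fix x y assume x: "x \<in> ?C" and y: "y \<in> ?C" and ne: "x \<noteq> y"
    from x consider "x = [2]" | "x = [3]" | (xa) x' where "x = 0#x'" "x' \<in> CA" by blast
    then show "wless (Dh a) x y \<or> wless (Dh a) y x"
    proof cases
      case 1 then show ?thesis using y ne sA by auto
    next
      case 2 then show ?thesis using y ne sA by auto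
    next
      case xa
      from y consider "y = [2]" | "y = [3]" | (ya) y' where "y = 0#y'" "y' \<in> CA" by blast
      then show ?thesis
      proof cases
        case 1 then show ?thesis using xa sA by auto
      next
        case 2 then show ?thesis using xa sA by auto
      next
        case ya then show ?thesis using xa ne cA by simp
      qed
    qed
  qed
  moreover have "card ?C = Lf a + 2"
  proof -
    have "card ?C = card {[2::nat], [3]} + card (Cons 0 ` CA)"
      by (rule card_Un_disjoint) (use chain_fin[OF CA(1)] in auto)
    then show ?thesis using CA(2) by (simp add: card_image)
  qed
  ultimately show ?case unfolding Lf.simps by blast
qed

lemma max_chain_word: "max_chain (wcar w) (wless w) = Lf w"
  unfolding max_chain_def
proof (rule Max_eqI)
  show "finite {card C |C. is_chain_in (wcar w) (wless w) C}"
    by (rule finite_subset[of _ "{..Lf w}"]) (auto dest: chain_bound)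
  show "\<And>y. y \<in> {card C |C. is_chain_in (wcar w) (wless w) C} \<Longrightarrow> y \<le> Lf w"
    using chain_bound by auto
  show "Lf w \<in> {card C |C. is_chain_in (wcar w) (wless w) C}"
  proof -
    obtain C where C: "is_chain_in (wcar w) (wless w) C" "card C = Lf w" using chain_exists[of w] by blast
    show ?thesis unfolding mem_Collect_eq using C by (intro exI[of _ C]) simp
  qed
qed




abbreviation H :: "wword \<Rightarrow> (nat list \<times> nat list) set" where
  "H w \<equiv> hasse_edges (wcar w) (wless w)"

lemma H_mem: "(u, v) \<in> H w \<longleftrightarrow> u \<in> wcar w \<and> v \<in> wcar w \<and> wless w u v \<and>
    \<not> (\<exists>z\<in>wcar w. wless w u z \<and> wless w z v)"
  unfolding hasse_edges_def by simp

lemma H_One: "H One = {}" unfolding hasse_edges_def by simp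

lemma H_fin: "finite (H w)"
  by (rule finite_subset[of _ "wcar w \<times> wcar w"]) (auto simp: hasse_edges_def wcar_fin)

definition mp :: "nat \<Rightarrow> nat list \<times> nat list \<Rightarrow> nat list \<times> nat list" where
  "mp k = (\<lambda>(u, v). (k # u, k # v))"

lemma mp_inj: "inj (mp k)" by (auto simp: mp_def inj_def)

lemma H_Mu_00:
  assumes "x \<in> wcar a" "y \<in> wcar a"
  shows "(0#x, 0#y) \<in> H (Mu a b) \<longleftrightarrow> (x, y) \<in> H a"
proof
  assume h: "(0#x, 0#y) \<in> H (Mu a b)"
  have l: "wless a x y" using h unfolding H_mem by simp
  have nz: "\<not> (\<exists>z\<in>wcar a. wless a x z \<and> wless a z y)"
  proof
    assume "\<exists>z\<in>wcar a. wless a x z \<and> wless a z y"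
    then obtain z where z: "z \<in> wcar a" "wless a x z" "wless a z y" by blast
    have "0#z \<in> wcar (Mu a b)" "wless (Mu a b) (0#x) (0#z)" "wless (Mu a b) (0#z) (0#y)"
      using z by auto
    then show False using h unfolding H_mem by blast
  qed
  show "(x, y) \<in> H a" using assms l nz unfolding H_mem by simp
next
  assume h: "(x, y) \<in> H a"
  have l: "wless (Mu a b) (0#x) (0#y)" using h unfolding H_mem by simp
  have nz: "\<not> (\<exists>z\<in>wcar (Mu a b). wless (Mu a b) (0#x) z \<and> wless (Mu a b) z (0#y))"
  proof
    assume "\<exists>z\<in>wcar (Mu a b). wless (Mu a b) (0#x) z \<and> wless (Mu a b) z (0#y)"
    then obtain z where z: "z \<in> wcar (Mu a b)" "wless (Mu a b) (0#x) z" "wless (Mu a b) z (0#y)" by blast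
    from z(1) consider (A) z' where "z = 0#z'" "z' \<in> wcar a" | (B) z' where "z = 1#z'" "z' \<in> wcar b"
      by auto
    then show False
    proof cases
      case A
      then have "wless a x z'" "wless a z' y" using z by auto
      then show False using h A unfolding H_mem by blast
    next
      case B then show False using z by auto
    qed
  qed
  show "(0#x, 0#y) \<in> H (Mu a b)" using assms l nz unfolding H_mem by simp
qed

lemma H_Mu_11:
  assumes "x \<in> wcar b" "y \<in> wcar b"
  shows "(1#x, 1#y) \<in> H (Mu a b) \<longleftrightarrow> (x, y) \<in> H b"
proof
  assume h: "(1#x, 1#y) \<in> H (Mu a b)"
  have l: "wless b x y" using h unfolding H_mem by simp
  have nz: "\<not> (\<exists>z\<in>wcar b. wless b x z \<and> wless b z y)"
  proof
    assume "\<exists>z\<in>wcar b. wless b x z \<and> wless b z y"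
    then obtain z where z: "z \<in> wcar b" "wless b x z" "wless b z y" by blast
    have "1#z \<in> wcar (Mu a b)" "wless (Mu a b) (1#x) (1#z)" "wless (Mu a b) (1#z) (1#y)"
      using z by auto
    then show False using h unfolding H_mem by blast
  qed
  show "(x, y) \<in> H b" using assms l nz unfolding H_mem by simp
next
  assume h: "(x, y) \<in> H b"
  have l: "wless (Mu a b) (1#x) (1#y)" using h unfolding H_mem by simp
  have nz: "\<not> (\<exists>z\<in>wcar (Mu a b). wless (Mu a b) (1#x) z \<and> wless (Mu a b) z (1#y))"
  proof
    assume "\<exists>z\<in>wcar (Mu a b). wless (Mu a b) (1#x) z \<and> wless (Mu a b) z (1#y)"
    then obtain z where z: "z \<in> wcar (Mu a b)" "wless (Mu a b) (1#x) z" "wless (Mu a b) z (1#y)" by blast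
    from z(1) consider (A) z' where "z = 0#z'" "z' \<in> wcar a" | (B) z' where "z = 1#z'" "z' \<in> wcar b"
      by auto
    then show False
    proof cases
      case B
      then have "wless b x z'" "wless b z' y" using z by auto
      then show False using h B unfolding H_mem by blast
    next
      case A then show False using z by auto
    qed
  qed
  show "(1#x, 1#y) \<in> H (Mu a b)" using assms l nz unfolding H_mem by simp
qed

lemma H_Mu_01:
  assumes "x \<in> wcar a" "y \<in> wcar b"
  shows "(0#x, 1#y) \<in> H (Mu a b) \<longleftrightarrow> x = tp a \<and> y = bt b"
proof
  assume h: "(0#x, 1#y) \<in> H (Mu a b)"
  have nz: "\<And>z. z \<in> wcar (Mu a b) \<Longrightarrow> \<not> (wless (Mu a b) (0#x) z \<and> wless (Mu a b) z (1#y))"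
    using h unfolding H_mem by blast
  have "x = tp a"
  proof (rule ccontr)
    assume "x \<noteq> tp a"
    then have "wless a x (tp a)" using tp_greatest assms by blast
    then show False using nz[of "0 # tp a"] tp_in[of a] assms by auto
  qed
  moreover have "y = bt b"
  proof (rule ccontr)
    assume "y \<noteq> bt b"
    then have "wless b (bt b) y" using bt_least assms by blast
    then show False using nz[of "1 # bt b"] bt_in[of b] assms by auto
  qed
  ultimately show "x = tp a \<and> y = bt b" ..
next
  assume e: "x = tp a \<and> y = bt b"
  have nz: "\<not> (\<exists>z\<in>wcar (Mu a b). wless (Mu a b) (0#x) z \<and> wless (Mu a b) z (1#y))"
  proof
    assume "\<exists>z\<in>wcar (Mu a b). wless (Mu a b) (0#x) z \<and> wless (Mu a b) z (1#y)"
    then obtain z where z: "z \<in> wcar (Mu a b)" "wless (Mu a b) (0#x) z" "wless (Mu a b) z (1#y)" by blast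
    from z(1) consider (A) z' where "z = 0#z'" "z' \<in> wcar a" | (B) z' where "z = 1#z'" "z' \<in> wcar b"
      by auto
    then show False
    proof cases
      case A
      then have "wless a (tp a) z'" using z e by auto
      then show False using not_above_tp by blast
    next
      case B
      then have "wless b z' (bt b)" using z e by auto
      then show False using not_below_bt by blast
    qed
  qed
  show "(0#x, 1#y) \<in> H (Mu a b)" using assms nz unfolding H_mem by simp
qed

lemma H_Mu: "H (Mu a b) = mp 0 ` H a \<union> mp 1 ` H b \<union> {(0 # tp a, 1 # bt b)}"
proof (rule set_eqI)
  fix p :: "nat list \<times> nat list"
  obtain u v where p: "p = (u, v)" by (cases p)
  show "p \<in> H (Mu a b) \<longleftrightarrow> p \<in> mp 0 ` H a \<union> mp 1 ` H b \<union> {(0 # tp a, 1 # bt b)}"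
  proof
    assume h: "p \<in> H (Mu a b)"
    have h': "(u, v) \<in> H (Mu a b)" using h p by simp
    then have uv: "u \<in> wcar (Mu a b)" "v \<in> wcar (Mu a b)" "wless (Mu a b) u v" unfolding H_mem by blast+
    from uv(1) consider (A) u' where "u = 0#u'" "u' \<in> wcar a" | (B) u' where "u = 1#u'" "u' \<in> wcar b"
      by auto
    then show "p \<in> mp 0 ` H a \<union> mp 1 ` H b \<union> {(0 # tp a, 1 # bt b)}"
    proof cases
      case A
      from uv(2) consider (A') v' where "v = 0#v'" "v' \<in> wcar a" | (B') v' where "v = 1#v'" "v' \<in> wcar b"
        by auto
      then show ?thesis
      proof cases
        case A'
        then have "(u', v') \<in> H a" using H_Mu_00[of u' a v' b] A h p by simp
        then have "p \<in> mp 0 ` H a" by (rule rev_image_eqI) (simp add: mp_def A A' p)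
        then show ?thesis by blast
      next
        case B'
        then show ?thesis using H_Mu_01[of u' a v' b] A h p by simp
      qed
    next
      case B
      from uv(2) consider (A') v' where "v = 0#v'" "v' \<in> wcar a" | (B') v' where "v = 1#v'" "v' \<in> wcar b"
        by auto
      then show ?thesis
      proof cases
        case A'
        then show ?thesis using uv(3) B by simp
      next
        case B'
        then have "(u', v') \<in> H b" using H_Mu_11[of u' b v' a] B h p by simp
        then have "p \<in> mp 1 ` H b" by (rule rev_image_eqI) (simp add: mp_def B B' p)
        then show ?thesis by blast
      qed
    qed
  next
    assume "p \<in> mp 0 ` H a \<union> mp 1 ` H b \<union> {(0 # tp a, 1 # bt b)}"
    then consider (A) u' v' where "(u', v') \<in> H a" "p = (0#u', 0#v')"
      | (B) u' v' where "(u', v') \<in> H b" "p = (1#u', 1#v')"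
      | (C) "p = (0 # tp a, 1 # bt b)"
      by (auto simp: mp_def)
    then show "p \<in> H (Mu a b)"
    proof cases
      case A
      then have "u' \<in> wcar a" "v' \<in> wcar a" unfolding H_mem by auto
      then show ?thesis using A H_Mu_00 by blast
    next
      case B
      then have "u' \<in> wcar b" "v' \<in> wcar b" unfolding H_mem by auto
      then show ?thesis using B H_Mu_11 by blast
    next
      case C
      then show ?thesis using H_Mu_01[of "tp a" a "bt b" b] tp_in bt_in by blast
    qed
  qed
qed




lemma Dh_car_cases:
  assumes "z \<in> wcar (Dh a)"
  obtains "z = [2]" | "z = [3]" | "z = [4]" | z' where "z = 0 # z'" "z' \<in> wcar a"
  using assms by auto

lemma H_Dh_00:
  assumes "x \<in> wcar a" "y \<in> wcar a"
  shows "(0#x, 0#y) \<in> H (Dh a) \<longleftrightarrow> (x, y) \<in> H a"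
proof
  assume h: "(0#x, 0#y) \<in> H (Dh a)"
  have l: "wless a x y" using h unfolding H_mem by simp
  have nz: "\<not> (\<exists>z\<in>wcar a. wless a x z \<and> wless a z y)"
  proof
    assume "\<exists>z\<in>wcar a. wless a x z \<and> wless a z y"
    then obtain z where z: "z \<in> wcar a" "wless a x z" "wless a z y" by blast
    have "0#z \<in> wcar (Dh a)" "wless (Dh a) (0#x) (0#z)" "wless (Dh a) (0#z) (0#y)"
      using z by auto
    then show False using h unfolding H_mem by blast
  qed
  show "(x, y) \<in> H a" using assms l nz unfolding H_mem by simp
next
  assume h: "(x, y) \<in> H a"
  have l: "wless (Dh a) (0#x) (0#y)" using h unfolding H_mem by simp
  have nz: "\<not> (\<exists>z\<in>wcar (Dh a). wless (Dh a) (0#x) z \<and> wless (Dh a) z (0#y))"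
  proof
    assume "\<exists>z\<in>wcar (Dh a). wless (Dh a) (0#x) z \<and> wless (Dh a) z (0#y)"
    then obtain z where z: "z \<in> wcar (Dh a)" "wless (Dh a) (0#x) z" "wless (Dh a) z (0#y)" by blast
    from z(1) show False
    proof (cases rule: Dh_car_cases)
      case (4 z')
      then have "wless a x z'" "wless a z' y" using z by auto
      then show False using h 4 unfolding H_mem by blast
    qed (use z in auto)
  qed
  show "(0#x, 0#y) \<in> H (Dh a)" using assms l nz unfolding H_mem by simp
qed

lemma H_Dh_2:
  assumes "y \<in> wcar a"
  shows "([2], 0#y) \<in> H (Dh a) \<longleftrightarrow> y = bt a"
proof
  assume h: "([2], 0#y) \<in> H (Dh a)"
  show "y = bt a"
  proof (rule ccontr)
    assume "y \<noteq> bt a"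
    then have "wless a (bt a) y" using bt_least assms by blast
    then have "wless (Dh a) [2] (0 # bt a)" "wless (Dh a) (0 # bt a) (0#y)" "0 # bt a \<in> wcar (Dh a)"
      using bt_in[of a] by auto
    then show False using h unfolding H_mem by blast
  qed
next
  assume e: "y = bt a"
  have l: "wless (Dh a) [2] (0#y)" using e bt_in[of a] by auto
  have nz: "\<not> (\<exists>z\<in>wcar (Dh a). wless (Dh a) [2] z \<and> wless (Dh a) z (0#y))"
  proof
    assume "\<exists>z\<in>wcar (Dh a). wless (Dh a) [2] z \<and> wless (Dh a) z (0#y)"
    then obtain z where z: "z \<in> wcar (Dh a)" "wless (Dh a) [2] z" "wless (Dh a) z (0#y)" by blast
    from z(1) show False
    proof (cases rule: Dh_car_cases)
      case (4 z')
      then have "wless a z' (bt a)" using z e by auto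
      then show False using not_below_bt by blast
    qed (use z in auto)
  qed
  show "([2], 0#y) \<in> H (Dh a)" using assms l nz unfolding H_mem by simp
qed

lemma H_Dh_3:
  assumes "x \<in> wcar a"
  shows "(0#x, [3]) \<in> H (Dh a) \<longleftrightarrow> x = tp a"
proof
  assume h: "(0#x, [3]) \<in> H (Dh a)"
  show "x = tp a"
  proof (rule ccontr)
    assume "x \<noteq> tp a"
    then have "wless a x (tp a)" using tp_greatest assms by blast
    then have "wless (Dh a) (0#x) (0 # tp a)" "wless (Dh a) (0 # tp a) [3]" "0 # tp a \<in> wcar (Dh a)"
      using tp_in[of a] by auto
    then show False using h unfolding H_mem by blast
  qed
next
  assume e: "x = tp a"
  have l: "wless (Dh a) (0#x) [3]" using e tp_in[of a] by auto
  have nz: "\<not> (\<exists>z\<in>wcar (Dh a). wless (Dh a) (0#x) z \<and> wless (Dh a) z [3])"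
  proof
    assume "\<exists>z\<in>wcar (Dh a). wless (Dh a) (0#x) z \<and> wless (Dh a) z [3]"
    then obtain z where z: "z \<in> wcar (Dh a)" "wless (Dh a) (0#x) z" "wless (Dh a) z [3]" by blast
    from z(1) show False
    proof (cases rule: Dh_car_cases)
      case (4 z')
      then have "wless a (tp a) z'" using z e by auto
      then show False using not_above_tp by blast
    qed (use z in auto)
  qed
  show "(0#x, [3]) \<in> H (Dh a)" using assms l nz unfolding H_mem by simp
qed

lemma H_Dh_24: "([2], [4]) \<in> H (Dh a)"
  unfolding H_mem by auto

lemma H_Dh_43: "([4], [3]) \<in> H (Dh a)"
  unfolding H_mem by auto

lemma H_Dh_23: "([2], [3]) \<notin> H (Dh a)"
proof
  assume "([2], [3]) \<in> H (Dh a)"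
  moreover have "[4] \<in> wcar (Dh a)" "wless (Dh a) [2] [4]" "wless (Dh a) [4] [3]" by auto
  ultimately show False unfolding H_mem by blast
qed

lemma H_Dh: "H (Dh a) = mp 0 ` H a \<union> {([2], 0 # bt a), (0 # tp a, [3]), ([2], [4]), ([4], [3])}"
proof (rule set_eqI)
  fix p :: "nat list \<times> nat list"
  obtain u v where p: "p = (u, v)" by (cases p)
  show "p \<in> H (Dh a) \<longleftrightarrow> p \<in> mp 0 ` H a \<union> {([2], 0 # bt a), (0 # tp a, [3]), ([2], [4]), ([4], [3])}"
  proof
    assume h: "p \<in> H (Dh a)"
    have h': "(u, v) \<in> H (Dh a)" using h p by simp
    then have uv: "u \<in> wcar (Dh a)" "v \<in> wcar (Dh a)" "wless (Dh a) u v" unfolding H_mem by blast+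
    from uv(1) show "p \<in> mp 0 ` H a \<union> {([2], 0 # bt a), (0 # tp a, [3]), ([2], [4]), ([4], [3])}"
    proof (cases rule: Dh_car_cases)
      case 1
      from uv(2) show ?thesis
      proof (cases rule: Dh_car_cases)
        case 1 then show ?thesis using uv(3) \<open>u = [2]\<close> by simp
      next
        case 2 then show ?thesis using h' \<open>u = [2]\<close> H_Dh_23 by simp
      next
        case 3 then show ?thesis using p \<open>u = [2]\<close> by simp
      next
        case (4 y) then show ?thesis using p h' \<open>u = [2]\<close> H_Dh_2[of y a] by simp
      qed
    next
      case 2 then show ?thesis using uv by auto
    next
      case 3
      from uv(2) show ?thesis
      proof (cases rule: Dh_car_cases)
        case 2 then show ?thesis using p \<open>u = [4]\<close> by simp
      qed (use uv(3) \<open>u = [4]\<close> in auto)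
    next
      case (4 x)
      from uv(2) show ?thesis
      proof (cases rule: Dh_car_cases)
        case 2 then show ?thesis using p h' 4 H_Dh_3[of x a] by simp
      next
        case (4 y)
        then have "(x, y) \<in> H a" using H_Dh_00[of x a y] h' \<open>u = 0 # x\<close> \<open>x \<in> wcar a\<close> by simp
        then have "p \<in> mp 0 ` H a" by (rule rev_image_eqI) (simp add: mp_def 4 p \<open>u = 0 # x\<close>)
        then show ?thesis by blast
      qed (use uv(3) 4 in auto)
    qed
  next
    assume "p \<in> mp 0 ` H a \<union> {([2], 0 # bt a), (0 # tp a, [3]), ([2], [4]), ([4], [3])}"
    then consider (A) u' v' where "(u', v') \<in> H a" "p = (0#u', 0#v')"
      | (B) "p = ([2], 0 # bt a)" | (C) "p = (0 # tp a, [3])" | (D) "p = ([2], [4])" | (E) "p = ([4], [3])"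
      by (auto simp: mp_def)
    then show "p \<in> H (Dh a)"
    proof cases
      case A
      then have "u' \<in> wcar a" "v' \<in> wcar a" unfolding H_mem by auto
      then show ?thesis using A H_Dh_00 by blast
    next
      case B then show ?thesis using H_Dh_2[of "bt a" a] bt_in by blast
    next
      case C then show ?thesis using H_Dh_3[of "tp a" a] tp_in by blast
    next
      case D then show ?thesis using H_Dh_24 by simp
    next
      case E then show ?thesis using H_Dh_43 by simp
    qed
  qed
qed




lemma card_mp: "card (mp k ` S) = card S"
  by (rule card_image) (rule inj_on_subset[OF mp_inj], simp)

lemma card_H: "card (H w) + 1 = Kf w + count_D w"
proof (induction w)
  case One then show ?case by (simp only: H_One) simp
next
  case (Mu a b)
  let ?X = "mp 0 ` H a \<union> mp 1 ` H b"
  have finX: "finite ?X" using H_fin by auto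
  have nin: "(0 # tp a, 1 # bt b) \<notin> ?X" by (auto simp: mp_def)
  have "card (H (Mu a b)) = card (insert (0 # tp a, 1 # bt b) ?X)" unfolding H_Mu by simp
  also have "\<dots> = card ?X + 1" using finX nin by simp
  also have "card ?X = card (mp 0 ` H a) + card (mp 1 ` H b)"
    by (rule card_Un_disjoint) (auto simp: H_fin mp_def)
  also have "\<dots> = card (H a) + card (H b)"
    by (simp only: card_mp)
  finally show ?case using Mu.IH by simp
next
  case (Dh a)
  let ?Y = "{([2], 0 # bt a), (0 # tp a, [3]), ([2], [4]), ([4::nat], [3])}"
  have "card (H (Dh a)) = card (mp 0 ` H a) + card ?Y"
    unfolding H_Dh by (rule card_Un_disjoint) (auto simp: H_fin mp_def)
  also have "card ?Y = 4" by simp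
  also have "card (mp 0 ` H a) = card (H a)" by (simp only: card_mp)
  finally show ?case using Dh.IH by simp
qed

lemma rt_map:
  assumes "(x, y) \<in> (E \<union> E\<inverse>)\<^sup>*" and "\<And>u v. (u, v) \<in> E \<Longrightarrow> (f u, f v) \<in> E'"
  shows "(f x, f y) \<in> (E' \<union> E'\<inverse>)\<^sup>*"
  using assms(1)
proof (induction rule: rtrancl_induct)
  case base then show ?case by simp
next
  case (step y z)
  then have "(f y, f z) \<in> E' \<union> E'\<inverse>" using assms(2) by auto
  then show ?case using step.IH by (rule rtrancl_into_rtrancl[rotated])
qed

lemma conn: "x \<in> wcar w \<Longrightarrow> (bt w, x) \<in> (H w \<union> (H w)\<inverse>)\<^sup>*"
proof (induction w arbitrary: x)
  case One then show ?case by simp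
next
  case (Mu a b)
  have e0: "\<And>u v. (u, v) \<in> H a \<Longrightarrow> (0 # u, 0 # v) \<in> H (Mu a b)"
  proof -
    fix u v assume "(u, v) \<in> H a"
    then have "mp 0 (u, v) \<in> mp 0 ` H a" by blast
    then show "(0 # u, 0 # v) \<in> H (Mu a b)" unfolding H_Mu by (simp add: mp_def)
  qed
  have e1: "\<And>u v. (u, v) \<in> H b \<Longrightarrow> (1 # u, 1 # v) \<in> H (Mu a b)"
  proof -
    fix u v assume "(u, v) \<in> H b"
    then have "mp 1 (u, v) \<in> mp 1 ` H b" by blast
    then show "(1 # u, 1 # v) \<in> H (Mu a b)" unfolding H_Mu by (simp add: mp_def)
  qed
  from Mu.prems consider (A) x' where "x = 0 # x'" "x' \<in> wcar a" | (B) x' where "x = 1 # x'" "x' \<in> wcar b"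
    by auto
  then show ?case
  proof cases
    case A
    have "(0 # bt a, 0 # x') \<in> (H (Mu a b) \<union> (H (Mu a b))\<inverse>)\<^sup>*"
      by (rule rt_map[OF Mu.IH(1)[OF A(2)]]) (rule e0)
    then show ?thesis unfolding A(1) bt.simps .
  next
    case B
    have s1: "(0 # bt a, 0 # tp a) \<in> (H (Mu a b) \<union> (H (Mu a b))\<inverse>)\<^sup>*"
      by (rule rt_map[OF Mu.IH(1)[OF tp_in]]) (rule e0)
    have s2: "(0 # tp a, 1 # bt b) \<in> (H (Mu a b) \<union> (H (Mu a b))\<inverse>)\<^sup>*"
    proof -
      have "(0 # tp a, 1 # bt b) \<in> H (Mu a b)" by (simp only: H_Mu) blast
      then show ?thesis by blast
    qed
    have s3: "(1 # bt b, 1 # x') \<in> (H (Mu a b) \<union> (H (Mu a b))\<inverse>)\<^sup>*"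
      by (rule rt_map[OF Mu.IH(2)[OF B(2)]]) (rule e1)
    show ?thesis unfolding B(1) bt.simps by (rule rtrancl_trans[OF rtrancl_trans[OF s1 s2] s3])
  qed
next
  case (Dh a)
  let ?R = "(H (Dh a) \<union> (H (Dh a))\<inverse>)\<^sup>*"
  have e0: "\<And>u v. (u, v) \<in> H a \<Longrightarrow> (0 # u, 0 # v) \<in> H (Dh a)"
  proof -
    fix u v assume "(u, v) \<in> H a"
    then have "mp 0 (u, v) \<in> mp 0 ` H a" by blast
    then show "(0 # u, 0 # v) \<in> H (Dh a)" unfolding H_Dh by (simp add: mp_def)
  qed
  have s24: "([2], [4]) \<in> ?R" using H_Dh_24[of a] by blast
  have s43: "([4], [3]) \<in> ?R" using H_Dh_43[of a] by blast
  have "([2], 0 # bt a) \<in> H (Dh a)" by (simp only: H_Dh) blast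
  then have s20: "([2], 0 # bt a) \<in> ?R" by blast
  from Dh.prems show ?case
  proof (cases rule: Dh_car_cases)
    case 1 then show ?thesis unfolding bt.simps by (simp only: rtrancl.rtrancl_refl)
  next
    case 2 then show ?thesis unfolding bt.simps using rtrancl_trans[OF s24 s43] by (simp only:)
  next
    case 3 then show ?thesis unfolding bt.simps using s24 by (simp only:)
  next
    case (4 x')
    have "(0 # bt a, 0 # x') \<in> ?R" by (rule rt_map[OF Dh.IH[OF 4(2)]]) (rule e0)
    then show ?thesis unfolding bt.simps 4(1) by (rule rtrancl_trans[OF s20])
  qed
qed

lemma components_one: "components (wcar w) (H w) = {wcar w}"
proof -
  let ?R = "(H w \<union> (H w)\<inverse>)\<^sup>*"
  have sy: "sym ?R" by (rule sym_rtrancl) (rule sym_Un_converse)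
  have all: "\<And>x y. x \<in> wcar w \<Longrightarrow> y \<in> wcar w \<Longrightarrow> (x, y) \<in> ?R"
  proof -
    fix x y assume x: "x \<in> wcar w" and y: "y \<in> wcar w"
    have "(x, bt w) \<in> ?R" using conn[OF x] sy by (meson symD)
    then show "(x, y) \<in> ?R" using conn[OF y] by (rule rtrancl_trans)
  qed
  have rel: "{(x, y). x \<in> wcar w \<and> y \<in> wcar w \<and> (x, y) \<in> ?R} = wcar w \<times> wcar w"
    using all by auto
  show ?thesis unfolding components_def rel quotient_def using wcar_ne[of w] by auto
qed

lemma betti_word: "betti1_hasse (wcar w) (wless w) = int (count_D w)"
proof -
  have "card (components (wcar w) (H w)) = 1" by (simp add: components_one)
  then show ?thesis unfolding betti1_hasse_def using card_H[of w] card_wcar[of w] by simp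
qed

lemma KLD: "Kf w = Lf w + count_D w" by (induction w) auto
lemma LMD: "Lf w = count_mu w + 2 * count_D w + 1" by (induction w) auto
lemma leaves_mu: "leaves w = count_mu w + 1" by (induction w) auto




lemma sum_conv:
  fixes a :: "nat \<Rightarrow> nat"
  shows "(\<Sum>j=i..k. real (a j) * real (n choose j)) =
         (\<Sum>j\<le>n. real (if j \<in> {i..k} then a j else 0) * real (n choose j))"
proof -
  let ?b = "\<lambda>j. real (if j \<in> {i..k} then a j else 0) * real (n choose j)"
  have "(\<Sum>j=i..k. real (a j) * real (n choose j)) = (\<Sum>j=i..k. ?b j)" by (rule sum.cong) auto
  also have "\<dots> = (\<Sum>j\<le>max n k. ?b j)" by (rule sum.mono_neutral_left) auto
  also have "\<dots> = (\<Sum>j\<le>n. ?b j)" by (rule sum.mono_neutral_right) (auto simp: binomial_eq_0)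
  finally show ?thesis .
qed

lemma nth_zsum: "fps_nth (\<Sum>j\<in>S. of_nat (a j) * zeta j) n = (\<Sum>j\<in>S. real (a j) * real (n choose j))"
  unfolding fps_sum_nth by (rule sum.cong) (simp_all add: fps_of_nat[symmetric] zeta_nth)

lemma uniq:
  fixes a a' :: "nat \<Rightarrow> nat"
  assumes eq: "(\<Sum>j=i..k. of_nat (a j) * zeta j) = (\<Sum>j=i'..k'. of_nat (a' j) * zeta j)"
    and nz: "a i \<noteq> 0" "a k \<noteq> 0" "a' i' \<noteq> 0" "a' k' \<noteq> 0" and le: "i \<le> k" "i' \<le> k'"
  shows "i' = i \<and> k' = k \<and> (\<forall>j\<in>{i..k}. a' j = a j)"
proof -
  define b where "b = (\<lambda>j. if j \<in> {i..k} then a j else 0)"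
  define b' where "b' = (\<lambda>j. if j \<in> {i'..k'} then a' j else 0)"
  have E: "\<And>n. (\<Sum>j\<le>n. real (b j) * real (n choose j)) = (\<Sum>j\<le>n. real (b' j) * real (n choose j))"
  proof -
    fix n
    have "fps_nth (\<Sum>j=i..k. of_nat (a j) * zeta j) n = fps_nth (\<Sum>j=i'..k'. of_nat (a' j) * zeta j) n"
      using eq by simp
    then show "(\<Sum>j\<le>n. real (b j) * real (n choose j)) = (\<Sum>j\<le>n. real (b' j) * real (n choose j))"
      unfolding nth_zsum sum_conv b_def b'_def .
  qed
  have bb: "b n = b' n" for n
  proof (induction n rule: less_induct)
    case (less n)
    have s: "\<And>c. (\<Sum>j\<le>n. real (c j) * real (n choose j)) =
               (\<Sum>j<n. real (c j) * real (n choose j)) + real (c n)"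
      by (simp add: lessThan_Suc_atMost[symmetric])
    have "(\<Sum>j<n. real (b j) * real (n choose j)) = (\<Sum>j<n. real (b' j) * real (n choose j))"
      using less by (intro sum.cong) auto
    then show ?case using E[of n] s[of b] s[of b'] by simp
  qed
  have "b i \<noteq> 0" using nz le by (simp add: b_def)
  then have "b' i \<noteq> 0" using bb by simp
  then have i1: "i' \<le> i" "i \<le> k'" by (auto simp: b'_def split: if_splits)
  have "b' i' \<noteq> 0" using nz le by (simp add: b'_def)
  then have "b i' \<noteq> 0" using bb by simp
  then have i2: "i \<le> i'" "i' \<le> k" by (auto simp: b_def split: if_splits)
  have "b k \<noteq> 0" using nz le by (simp add: b_def)
  then have "b' k \<noteq> 0" using bb by simp
  then have k1: "k \<le> k'" by (auto simp: b'_def split: if_splits)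
  have "b' k' \<noteq> 0" using nz le by (simp add: b'_def)
  then have "b k' \<noteq> 0" using bb by simp
  then have k2: "k' \<le> k" by (auto simp: b_def split: if_splits)
  have ii: "i' = i" and kk: "k' = k" using i1 i2 k1 k2 by auto
  have "\<forall>j\<in>{i..k}. a' j = a j"
  proof
    fix j assume "j \<in> {i..k}"
    then show "a' j = a j" using bb[of j] ii kk by (simp add: b_def b'_def)
  qed
  then show ?thesis using ii kk by simp
qed

theorem proposition3p1:
  fixes w :: wword
  defines "V \<equiv> wcar w" and "lt \<equiv> wless w"
      and "m \<equiv> count_mu w" and "d \<equiv> count_D w"
  shows "\<exists>i k (a :: nat \<Rightarrow> nat).
     1 \<le> i \<and> i \<le> k \<and> a i \<noteq> 0 \<and> a k \<noteq> 0 \<and>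
     Zser V lt = (\<Sum>j=i..k. of_nat (a j) * zeta j) \<and>
     (\<forall>i' k' (a' :: nat \<Rightarrow> nat).
        1 \<le> i' \<and> i' \<le> k' \<and> a' i' \<noteq> 0 \<and> a' k' \<noteq> 0 \<and>
        Zser V lt = (\<Sum>j=i'..k'. of_nat (a' j) * zeta j)
        \<longrightarrow> i' = i \<and> k' = k \<and> (\<forall>j\<in>{i..k}. a' j = a j)) \<and>
     i = max_chain V lt \<and>
     k = card V \<and>
     k - i = d \<and> int d = betti1_hasse V lt \<and>
     int m = int i - 2 * int d - 1 \<and> leaves w = m + 1 \<and>
     (\<Sum>u=i..k. (-1::int) ^ (k - u) * int (a u)) = 1"
proof -
  let ?i = "Lf w" and ?k = "Kf w" and ?a = "cw w"
  have LKw: "1 \<le> ?i" "?i \<le> ?k" using LK[of w] by auto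
  have ends: "?a ?i \<noteq> 0" "?a ?k \<noteq> 0" using cw_ends[of w] by auto
  have below: "\<And>j. j < ?i \<Longrightarrow> ?a j = 0" using cw_support[of w] by fastforce
  have Z: "Zser V lt = (\<Sum>j=?i..?k. of_nat (?a j) * zeta j)"
  proof -
    have "Zser V lt = (\<Sum>j\<le>?k. of_nat (?a j) * zeta j)" unfolding V_def lt_def by (rule Z_word)
    also have "\<dots> = (\<Sum>j=?i..?k. of_nat (?a j) * zeta j)"
      by (rule sum.mono_neutral_right) (auto simp: below)
    finally show ?thesis .
  qed
  have U: "\<forall>i' k' (a' :: nat \<Rightarrow> nat).
        1 \<le> i' \<and> i' \<le> k' \<and> a' i' \<noteq> 0 \<and> a' k' \<noteq> 0 \<and>
        Zser V lt = (\<Sum>j=i'..k'. of_nat (a' j) * zeta j)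
        \<longrightarrow> i' = ?i \<and> k' = ?k \<and> (\<forall>j\<in>{?i..?k}. a' j = ?a j)"
  proof (intro allI impI)
    fix i' k' and a' :: "nat \<Rightarrow> nat"
    assume h: "1 \<le> i' \<and> i' \<le> k' \<and> a' i' \<noteq> 0 \<and> a' k' \<noteq> 0 \<and>
        Zser V lt = (\<Sum>j=i'..k'. of_nat (a' j) * zeta j)"
    show "i' = ?i \<and> k' = ?k \<and> (\<forall>j\<in>{?i..?k}. a' j = ?a j)"
      by (rule uniq) (use h Z ends LKw in auto)
  qed
  have mc: "?i = max_chain V lt" unfolding V_def lt_def by (simp add: max_chain_word)
  have cd: "?k = card V" unfolding V_def by (simp add: card_wcar)
  have kd: "?k - ?i = d" unfolding d_def using KLD[of w] by simp
  have bt: "int d = betti1_hasse V lt" unfolding d_def V_def lt_def by (simp add: betti_word)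
  have mm: "int m = int ?i - 2 * int d - 1" unfolding m_def d_def using LMD[of w] by simp
  have lv: "leaves w = m + 1" unfolding m_def by (rule leaves_mu)
  have alt: "(\<Sum>u=?i..?k. (-1::int) ^ (?k - u) * int (?a u)) = 1"
  proof -
    have "(\<Sum>u=?i..?k. (-1::int) ^ (?k - u) * int (?a u)) = (\<Sum>u\<le>?k. (-1::int) ^ (?k - u) * int (?a u))"
      by (rule sum.mono_neutral_left) (auto simp: below)
    also have "\<dots> = (\<Sum>u\<le>?k. (-1::int) ^ ?k * ((-1) ^ u * int (?a u)))"
    proof (rule sum.cong[OF refl])
      fix u assume "u \<in> {..?k}"
      then have "(-1::int) ^ ?k = (-1) ^ (?k - u) * (-1) ^ u" by (simp add: power_add[symmetric])
      then have "(-1::int) ^ ?k * (-1) ^ u = (-1) ^ (?k - u) * ((-1) ^ u * (-1) ^ u)" by simp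
      also have "(-1::int) ^ u * (-1) ^ u = 1" by (simp add: power_add[symmetric])
      finally show "(-1::int) ^ (?k - u) * int (?a u) = (-1) ^ ?k * ((-1) ^ u * int (?a u))"
        by (simp add: mult.assoc[symmetric])
    qed
    also have "\<dots> = (-1) ^ ?k * (-1) ^ ?k" by (simp add: sum_distrib_left[symmetric] alt_word)
    also have "\<dots> = 1" by (simp add: power_add[symmetric])
    finally show ?thesis .
  qed
  show ?thesis
    by (rule exI[of _ ?i], rule exI[of _ ?k], rule exI[of _ ?a])
       (use LKw ends Z U mc cd kd bt mm lv alt in blast)
qed


end
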